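(* Let $\mathbb K$ be a computable zero-sum free commutative semiring (with $0\neq1$). Given a weighted nested word automaton $\mathcal A$ over $\mathbb K$, it is decidable whether $\|\mathcal A\|(nw)=0$ for all $nw\in\mathrm{NW}(\Delta)$.
   Context: Nested words: $\Delta$ finite alphabet. A nesting relation of width $n$ is a relation $\nu$ on $[n]$ with: $\nu(i,j)\Rightarrow i<j$; $\nu(i,j),\nu(i,j')\Rightarrow j=j'$ and $\nu(i,j),\nu(i',j)\Rightarrow i=i'$; $\nu(i,j),\nu(i',j'),i<i'\Rightarrow j<i'$ or $j'<j$. A nested word is $(w,\nu)$, $w=a_1\cdots a_n\in\Delta^+$, $\nu$ of width $n$; $\mathrm{NW}(\Delta)$ is their set. If $\nu(i,j)$, $i$ is a call and $j$ a return position; others are internal. WNWA over $\mathbb K$: $\mathcal A=(Q,\iota,\delta_{call},\delta_{int},\delta_{ret},\kappa)$, $Q$ finite, $\delta_{call},\delta_{int}:Q\times\Delta\times Q\to K$, $\delta_{ret}:Q\times Q\times\Delta\times Q\to K$, $\iota,\kappa:Q\to K$. A run on $(a_1\cdots a_n,\nu)$ is $(q_0,\dots,q_n)$; weight at $j$: $\delta_{call}(q_{j-1},a_j,q_j)$ for a call $j$, $\delta_{int}(q_{j-1},a_j,q_j)$ for internal $j$, $\delta_{ret}(q_{j-1},q_{i-1},a_j,q_j)$ if $\nu(i,j)$; run weight is the product. $\|\mathcal A\|(nw)=\sum_{(q_0..q_n)}\iota(q_0)\mathrm{wt}\,\kappa(q_n)$; series of this form are regular. $\mathbb K$ is zero-sum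 free if $a+b=0$ implies $a=b=0$; computable means elements are finitely representable and operations and equality are computable. *)

theory Defs
  imports Main "HOL-Library.Nat_Bijection"
begin

datatype recf = Z | S | Id nat | Cn recf "recf list" | Pr recf recf | Mn recf

inductive eval :: "recf \<Rightarrow> nat list \<Rightarrow> nat \<Rightarrow> bool" where
  eval_Z: "eval Z xs 0"
| eval_S: "eval S (x # xs) (Suc x)"
| eval_Id: "i < length xs \<Longrightarrow> eval (Id i) xs (xs ! i)"
| eval_Cn: "length ys = length gs \<Longrightarrow> (\<forall>k < length gs. eval (gs ! k) xs (ys ! k))
            \<Longrightarrow> eval f ys y \<Longrightarrow> eval (Cn f gs) xs y"
| eval_Pr0: "eval f xs y \<Longrightarrow> eval (Pr f g) (0 # xs) y"
| eval_PrS: "eval (Pr f g) (n # xs) y \<Longrightarrow> eval g (y # n # xs) z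
            \<Longrightarrow> eval (Pr f g) (Suc n # xs) z"
| eval_Mn: "eval f (y # xs) 0 \<Longrightarrow> (\<forall>k < y. \<exists>v. eval f (k # xs) v \<and> 0 < v)
            \<Longrightarrow> eval (Mn f) xs y"

text \<open>K is computable w.r.t. an injective coding enc of its elements by natural
  numbers (finite representability; equality of elements then reduces to equality
  of codes) if addition and multiplication are computed by recursive programs.\<close>

definition computable_semiring :: "('k::comm_semiring_1 \<Rightarrow> nat) \<Rightarrow> bool" where
  "computable_semiring enc \<longleftrightarrow> inj enc \<and>
     (\<exists>p. \<forall>a b. eval p [enc a, enc b] (enc (a + b))) \<and>
     (\<exists>p. \<forall>a b. eval p [enc a, enc b] (enc (a * b)))"

definition zero_sum_free :: "'k::comm_semiring_1 itself \<Rightarrow> bool" where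
  "zero_sum_free _ \<longleftrightarrow> (\<forall>a b :: 'k. a + b = 0 \<longrightarrow> a = 0 \<and> b = 0)"

definition nesting :: "nat \<Rightarrow> (nat \<times> nat) set \<Rightarrow> bool" where
  "nesting n \<nu> \<longleftrightarrow> \<nu> \<subseteq> {1..n} \<times> {1..n}
     \<and> (\<forall>i j. (i, j) \<in> \<nu> \<longrightarrow> i < j)
     \<and> (\<forall>i j j'. (i, j) \<in> \<nu> \<longrightarrow> (i, j') \<in> \<nu> \<longrightarrow> j = j')
     \<and> (\<forall>i i' j. (i, j) \<in> \<nu> \<longrightarrow> (i', j) \<in> \<nu> \<longrightarrow> i = i')
     \<and> (\<forall>i j i' j'. (i, j) \<in> \<nu> \<longrightarrow> (i', j') \<in> \<nu> \<longrightarrow> i < i' \<longrightarrow> j < i' \<or> j' < j)"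

definition NW :: "nat \<Rightarrow> (nat list \<times> (nat \<times> nat) set) set" where
  "NW m = {(w, \<nu>). w \<noteq> [] \<and> set w \<subseteq> {..<m} \<and> nesting (length w) \<nu>}"

record 'k wnwa =
  nst :: nat
  iota :: "nat \<Rightarrow> 'k"
  dcall :: "nat \<Rightarrow> nat \<Rightarrow> nat \<Rightarrow> 'k"
  dint :: "nat \<Rightarrow> nat \<Rightarrow> nat \<Rightarrow> 'k"
  dret :: "nat \<Rightarrow> nat \<Rightarrow> nat \<Rightarrow> nat \<Rightarrow> 'k"
  kappa :: "nat \<Rightarrow> 'k"

text \<open>Weight of position j (1-based) of run qs = (q_0,...,q_n) on (w, nu).\<close>
definition pos_weight ::
  "'k wnwa \<Rightarrow> nat list \<Rightarrow> (nat \<times> nat) set \<Rightarrow> nat list \<Rightarrow> nat \<Rightarrow> 'k" where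
  "pos_weight A w \<nu> qs j =
     (if \<exists>k. (j, k) \<in> \<nu> then dcall A (qs ! (j - 1)) (w ! (j - 1)) (qs ! j)
      else if \<exists>i. (i, j) \<in> \<nu> then
        dret A (qs ! (j - 1)) (qs ! ((THE i. (i, j) \<in> \<nu>) - 1)) (w ! (j - 1)) (qs ! j)
      else dint A (qs ! (j - 1)) (w ! (j - 1)) (qs ! j))"

definition runs :: "'k wnwa \<Rightarrow> nat \<Rightarrow> nat list set" where
  "runs A n = {qs. length qs = Suc n \<and> set qs \<subseteq> {..<nst A}}"

definition behaviour :: "'k::comm_semiring_1 wnwa \<Rightarrow> nat list \<times> (nat \<times> nat) set \<Rightarrow> 'k" where
  "behaviour A nw = (case nw of (w, \<nu>) \<Rightarrow>
     (\<Sum>qs \<in> runs A (length w).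
        iota A (qs ! 0) * (\<Prod>j \<in> {1..length w}. pos_weight A w \<nu> qs j)
        * kappa A (qs ! length w)))"

definition code_wnwa :: "nat \<Rightarrow> ('k \<Rightarrow> nat) \<Rightarrow> 'k wnwa \<Rightarrow> nat" where
  "code_wnwa m enc A = (let n = nst A in list_encode (
      [n]
    @ [enc (iota A p). p \<leftarrow> [0..<n]]
    @ [enc (dcall A p a q). p \<leftarrow> [0..<n], a \<leftarrow> [0..<m], q \<leftarrow> [0..<n]]
    @ [enc (dint A p a q). p \<leftarrow> [0..<n], a \<leftarrow> [0..<m], q \<leftarrow> [0..<n]]
    @ [enc (dret A p p' a q). p \<leftarrow> [0..<n], p' \<leftarrow> [0..<n], a \<leftarrow> [0..<m], q \<leftarrow> [0..<n]]
    @ [enc (kappa A p). p \<leftarrow> [0..<n]]))"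

end

theory Submission
  imports Defs
begin


definition rcomp :: "nat \<Rightarrow> (nat list \<Rightarrow> bool) \<Rightarrow> (nat list \<Rightarrow> nat) \<Rightarrow> bool" where
  "rcomp k D f \<longleftrightarrow> (\<exists>p. \<forall>xs. length xs = k \<longrightarrow> D xs \<longrightarrow> eval p xs (f xs))"

lemma rc_cong: "rcomp k D f \<Longrightarrow> (\<And>xs. length xs = k \<Longrightarrow> D xs \<Longrightarrow> f xs = g xs) \<Longrightarrow> rcomp k D g"
  unfolding rcomp_def by metis

lemma rc_mono: "rcomp k D f \<Longrightarrow> (\<And>xs. length xs = k \<Longrightarrow> D' xs \<Longrightarrow> D xs) \<Longrightarrow> rcomp k D' f"
  unfolding rcomp_def by metis

lemma rc_zero: "rcomp k D (\<lambda>_. 0)"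
  unfolding rcomp_def by (auto intro: eval_Z)

lemma rc_proj: "i < k \<Longrightarrow> rcomp k D (\<lambda>xs. xs ! i)"
  unfolding rcomp_def by (rule exI[of _ "Id i"]) (auto intro: eval_Id)

lemma rc_cn:
  assumes F: "rcomp j E F" and len: "length gs = j" and gs: "\<forall>g\<in>set gs. rcomp k D g"
    and dom: "\<And>xs. length xs = k \<Longrightarrow> D xs \<Longrightarrow> E (map (\<lambda>g. g xs) gs)"
  shows "rcomp k D (\<lambda>xs. F (map (\<lambda>g. g xs) gs))"
proof -
  from gs obtain P where P: "\<forall>g\<in>set gs. \<forall>xs. length xs = k \<longrightarrow> D xs \<longrightarrow> eval (P g) xs (g xs)"
    unfolding rcomp_def by metis
  from F obtain pF where pF: "\<forall>ys. length ys = j \<longrightarrow> E ys \<longrightarrow> eval pF ys (F ys)"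
    unfolding rcomp_def by blast
  show ?thesis unfolding rcomp_def
  proof (intro exI allI impI)
    fix xs assume xs: "length xs = k" "D xs"
    show "eval (Cn pF (map P gs)) xs (F (map (\<lambda>g. g xs) gs))"
    proof (rule eval_Cn)
      show "length (map (\<lambda>g. g xs) gs) = length (map P gs)" by simp
      show "\<forall>ka<length (map P gs). eval (map P gs ! ka) xs (map (\<lambda>g. g xs) gs ! ka)"
        using P xs by auto
      show "eval pF (map (\<lambda>g. g xs) gs) (F (map (\<lambda>g. g xs) gs))"
        using pF dom[OF xs] len by auto
    qed
  qed
qed

lemma rc_succ: "rcomp k D f \<Longrightarrow> rcomp k D (\<lambda>xs. Suc (f xs))"
proof -
  assume f: "rcomp k D f"
  have S: "rcomp 1 (\<lambda>_. True) (\<lambda>ys. Suc (ys ! 0))"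
    unfolding rcomp_def
    by (rule exI[of _ S]) (auto simp: length_Suc_conv intro: eval_S)
  from rc_cn[OF S, of "[f]" k D] f show ?thesis by simp
qed

primrec prec :: "(nat list \<Rightarrow> nat) \<Rightarrow> (nat list \<Rightarrow> nat) \<Rightarrow> nat \<Rightarrow> nat list \<Rightarrow> nat" where
  "prec b g 0 xs = b xs"
| "prec b g (Suc n) xs = g (prec b g n xs # n # xs)"

lemma rc_pr0:
  assumes b: "rcomp k D b" and g: "rcomp (Suc (Suc k)) E g"
    and inv: "\<And>n xs. length xs = k \<Longrightarrow> D xs \<Longrightarrow> E (prec b g n xs # n # xs)"
  shows "rcomp (Suc k) (\<lambda>ys. D (tl ys)) (\<lambda>ys. prec b g (hd ys) (tl ys))"
proof -
  from b obtain pb where pb: "\<forall>xs. length xs = k \<longrightarrow> D xs \<longrightarrow> eval pb xs (b xs)"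
    unfolding rcomp_def by blast
  from g obtain pg where pg: "\<forall>xs. length xs = Suc (Suc k) \<longrightarrow> E xs \<longrightarrow> eval pg xs (g xs)"
    unfolding rcomp_def by blast
  have *: "eval (Pr pb pg) (n # xs) (prec b g n xs)" if "length xs = k" "D xs" for n xs
    using that
  proof (induction n)
    case 0 then show ?case using pb by (auto intro: eval_Pr0)
  next
    case (Suc n)
    then show ?case using pg inv[OF Suc.prems] by (auto intro: eval_PrS)
  qed
  show ?thesis unfolding rcomp_def
    apply (rule exI[of _ "Pr pb pg"])
    using * by (auto simp: length_Suc_conv)
qed

lemma map_nth_upt: "length xs = k \<Longrightarrow> map (\<lambda>i. xs ! i) [0..<k] = xs"
  using map_nth[of xs] by simp

lemma map_drop2: "length ys = Suc (Suc k) \<Longrightarrow> map (\<lambda>i. ys ! Suc (Suc i)) [0..<k] = drop 2 ys"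
  by (rule nth_equalityI) auto

lemma rc_prec:
  assumes b: "rcomp k D b" and g: "rcomp (Suc (Suc k)) E g"
    and inv: "\<And>n xs. length xs = k \<Longrightarrow> D xs \<Longrightarrow> E (prec b g n xs # n # xs)"
    and a: "rcomp k D a"
  shows "rcomp k D (\<lambda>xs. prec b g (a xs) xs)"
proof -
  have P: "rcomp (Suc k) (\<lambda>ys. D (tl ys)) (\<lambda>ys. prec b g (hd ys) (tl ys))"
    by (rule rc_pr0[OF b g inv])
  have "rcomp k D (\<lambda>xs. (\<lambda>ys. prec b g (hd ys) (tl ys)) (map (\<lambda>g. g xs) (a # map (\<lambda>i xs. xs ! i) [0..<k])))"
    by (rule rc_cn[OF P]) (auto simp: a rc_proj map_nth_upt comp_def)
  then show ?thesis by (rule rc_cong) (simp add: comp_def map_nth_upt)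
qed

lemma rc_const: "rcomp k D (\<lambda>_. c)"
  by (induction c) (auto intro: rc_zero rc_succ)

lemma rc_drop2: "rcomp k D g \<Longrightarrow> rcomp (Suc (Suc k)) (\<lambda>ys. D (drop 2 ys)) (\<lambda>ys. g (drop 2 ys))"
proof -
  assume g: "rcomp k D g"
  have "rcomp (Suc (Suc k)) (\<lambda>ys. D (drop 2 ys)) (\<lambda>ys. g (map (\<lambda>h. h ys) (map (\<lambda>i ys. ys ! (i+2)) [0..<k])))"
    by (rule rc_cn[OF g]) (auto simp: rc_proj comp_def map_drop2)
  then show ?thesis
    by (rule rc_cong) (auto simp: comp_def map_drop2)
qed

lemma rc_shift: "rcomp (Suc k) (\<lambda>ys. D (tl ys)) G \<Longrightarrow>
  rcomp (Suc (Suc k)) (\<lambda>ys. D (drop 2 ys)) (\<lambda>ys. G (ys ! 1 # drop 2 ys))"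
proof -
  assume G: "rcomp (Suc k) (\<lambda>ys. D (tl ys)) G"
  have "rcomp (Suc (Suc k)) (\<lambda>ys. D (drop 2 ys))
     (\<lambda>ys. G (map (\<lambda>h. h ys) ((\<lambda>ys. ys ! 1) # map (\<lambda>i ys. ys ! (i+2)) [0..<k])))"
    by (rule rc_cn[OF G]) (auto simp: rc_proj comp_def map_drop2)
  then show ?thesis
    by (rule rc_cong) (auto simp: comp_def map_drop2)
qed

lemma prec_add: "prec g (\<lambda>ys. Suc (ys ! 0)) n xs = g xs + n"
  by (induction n) auto

lemma rc_add: "rcomp k D f \<Longrightarrow> rcomp k D g \<Longrightarrow> rcomp k D (\<lambda>xs. f xs + g xs)"
proof -
  assume f: "rcomp k D f" and g: "rcomp k D g"
  have "rcomp k D (\<lambda>xs. prec g (\<lambda>ys. Suc (ys ! 0)) (f xs) xs)"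
    by (rule rc_prec[OF g _ _ f, where E="\<lambda>_. True"]) (auto intro: rc_succ rc_proj)
  then show ?thesis by (rule rc_cong) (simp add: prec_add)
qed

lemma prec_mult: "prec (\<lambda>_. 0) (\<lambda>ys. ys ! 0 + g (drop 2 ys)) n xs = n * g xs"
  by (induction n) auto

lemma rc_mult: "rcomp k D f \<Longrightarrow> rcomp k D g \<Longrightarrow> rcomp k D (\<lambda>xs. f xs * g xs)"
proof -
  assume f: "rcomp k D f" and g: "rcomp k D g"
  have "rcomp k D (\<lambda>xs. prec (\<lambda>_. 0) (\<lambda>ys. ys ! 0 + g (drop 2 ys)) (f xs) xs)"
    by (rule rc_prec[OF rc_zero _ _ f, where E="\<lambda>ys. D (drop 2 ys)"])
       (auto intro!: rc_add rc_proj rc_mono[OF rc_drop2[OF g]])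
  then show ?thesis by (rule rc_cong) (simp add: prec_mult)
qed

lemma prec_pred: "prec (\<lambda>_. 0) (\<lambda>ys. ys ! 1) n xs = n - 1"
  by (induction n) auto

lemma rc_pred: "rcomp k D f \<Longrightarrow> rcomp k D (\<lambda>xs. f xs - 1)"
proof -
  assume f: "rcomp k D f"
  have "rcomp k D (\<lambda>xs. prec (\<lambda>_. 0) (\<lambda>ys. ys ! 1) (f xs) xs)"
    by (rule rc_prec[OF rc_zero _ _ f, where E="\<lambda>_. True"]) (auto intro!: rc_proj)
  then show ?thesis by (rule rc_cong) (metis prec_pred)
qed

lemma prec_sub: "prec f (\<lambda>ys. ys ! 0 - 1) n xs = f xs - n"
  by (induction n) auto

lemma rc_sub: "rcomp k D f \<Longrightarrow> rcomp k D g \<Longrightarrow> rcomp k D (\<lambda>xs. f xs - g xs)"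
proof -
  assume f: "rcomp k D f" and g: "rcomp k D g"
  have "rcomp k D (\<lambda>xs. prec f (\<lambda>ys. ys ! 0 - 1) (g xs) xs)"
    by (rule rc_prec[OF f _ _ g, where E="\<lambda>_. True"]) (auto intro!: rc_proj rc_pred[of _ _ "\<lambda>ys. ys ! 0", simplified])
  then show ?thesis by (rule rc_cong) (metis prec_sub)
qed

lemma rc_lt: "rcomp k D f \<Longrightarrow> rcomp k D g \<Longrightarrow> rcomp k D (\<lambda>xs. of_bool (f xs < g xs))"
  apply (rule rc_cong[where f="\<lambda>xs. 1 - (1 - (g xs - f xs))"])
   apply (intro rc_sub rc_const; assumption)
  by auto

lemma rc_le: "rcomp k D f \<Longrightarrow> rcomp k D g \<Longrightarrow> rcomp k D (\<lambda>xs. of_bool (f xs \<le> g xs))"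
  apply (rule rc_cong[where f="\<lambda>xs. 1 - (f xs - g xs)"])
   apply (intro rc_sub rc_const; assumption)
  by auto

lemma rc_eq: "rcomp k D f \<Longrightarrow> rcomp k D g \<Longrightarrow> rcomp k D (\<lambda>xs. of_bool (f xs = g xs))"
  apply (rule rc_cong[where f="\<lambda>xs. 1 - ((f xs - g xs) + (g xs - f xs))"])
   apply (intro rc_sub rc_add rc_const; assumption)
  by auto

lemma rc_not: "rcomp k D (\<lambda>xs. of_bool (P xs)) \<Longrightarrow> rcomp k D (\<lambda>xs. of_bool (\<not> P xs))"
  apply (rule rc_cong[where f="\<lambda>xs. 1 - of_bool (P xs)"])
   apply (intro rc_sub rc_const; assumption)
  by auto

lemma rc_conj: "rcomp k D (\<lambda>xs. of_bool (P xs)) \<Longrightarrow> rcomp k D (\<lambda>xs. of_bool (Q xs)) \<Longrightarrow>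
   rcomp k D (\<lambda>xs. of_bool (P xs \<and> Q xs))"
  apply (rule rc_cong[where f="\<lambda>xs. of_bool (P xs) * of_bool (Q xs)"])
   apply (intro rc_mult; assumption)
  by auto

lemma rc_disj: "rcomp k D (\<lambda>xs. of_bool (P xs)) \<Longrightarrow> rcomp k D (\<lambda>xs. of_bool (Q xs)) \<Longrightarrow>
   rcomp k D (\<lambda>xs. of_bool (P xs \<or> Q xs))"
  apply (rule rc_cong[where f="\<lambda>xs. of_bool (\<not> (\<not> P xs \<and> \<not> Q xs))"])
   apply (intro rc_not rc_conj; assumption)
  by auto

lemma rc_imp: "rcomp k D (\<lambda>xs. of_bool (P xs)) \<Longrightarrow> rcomp k D (\<lambda>xs. of_bool (Q xs)) \<Longrightarrow>
   rcomp k D (\<lambda>xs. of_bool (P xs \<longrightarrow> Q xs))"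
  apply (rule rc_cong[where f="\<lambda>xs. of_bool (\<not> P xs \<or> Q xs)"])
   apply (intro rc_not rc_disj; assumption)
  by auto

lemma rc_if: "rcomp k D (\<lambda>xs. of_bool (P xs)) \<Longrightarrow> rcomp k D f \<Longrightarrow> rcomp k D g \<Longrightarrow>
   rcomp k D (\<lambda>xs. if P xs then f xs else g xs)"
  apply (rule rc_cong[where f="\<lambda>xs. of_bool (P xs) * f xs + (1 - of_bool (P xs)) * g xs"])
   apply (intro rc_add rc_mult rc_sub rc_const; assumption)
  by auto

lemma prec_sum: "prec (\<lambda>_. 0) (\<lambda>ys. ys ! 0 + G (ys ! Suc 0 # drop 2 ys)) n xs = (\<Sum>i<n. G (i # xs))"
  by (induction n) auto

lemma rc_sum:
  assumes G: "rcomp (Suc k) (\<lambda>ys. D (tl ys)) G" and b: "rcomp k D b"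
    and eq: "\<And>i xs. length xs = k \<Longrightarrow> D xs \<Longrightarrow> G (i # xs) = h i xs"
  shows "rcomp k D (\<lambda>xs. \<Sum>i<b xs. h i xs)"
proof -
  have "rcomp k D (\<lambda>xs. prec (\<lambda>_. 0) (\<lambda>ys. ys ! 0 + G (ys ! 1 # drop 2 ys)) (b xs) xs)"
    by (rule rc_prec[OF rc_zero _ _ b, where E="\<lambda>ys. D (drop 2 ys)"])
       (auto intro!: rc_add rc_proj rc_shift[OF G, simplified])
  then show ?thesis by (rule rc_cong) (simp add: prec_sum eq)
qed

lemma rc_all:
  assumes G: "rcomp (Suc k) (\<lambda>ys. D (tl ys)) G" and b: "rcomp k D b"
    and eq: "\<And>i xs. length xs = k \<Longrightarrow> D xs \<Longrightarrow> G (i # xs) = of_bool (P i xs)"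
  shows "rcomp k D (\<lambda>xs. of_bool (\<forall>i<b xs. P i xs))"
proof -
  have G': "rcomp (Suc k) (\<lambda>ys. D (tl ys)) (\<lambda>ys. 1 - G ys)"
    by (intro rc_sub rc_const G)
  have "rcomp k D (\<lambda>xs. of_bool ((\<Sum>i<b xs. 1 - of_bool (P i xs)) = (0::nat)))"
    by (rule rc_eq[OF rc_sum[OF G' b] rc_const]) (simp add: eq)
  then show ?thesis by (rule rc_cong) auto
qed

lemma rc_ex:
  assumes G: "rcomp (Suc k) (\<lambda>ys. D (tl ys)) G" and b: "rcomp k D b"
    and eq: "\<And>i xs. length xs = k \<Longrightarrow> D xs \<Longrightarrow> G (i # xs) = of_bool (P i xs)"
  shows "rcomp k D (\<lambda>xs. of_bool (\<exists>i<b xs. P i xs))"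
proof -
  have G': "rcomp (Suc k) (\<lambda>ys. D (tl ys)) (\<lambda>ys. 1 - G ys)"
    by (intro rc_sub rc_const G)
  have "rcomp k D (\<lambda>xs. of_bool (\<not> (\<forall>i<b xs. \<not> P i xs)))"
    by (rule rc_not[OF rc_all[OF G' b]]) (simp add: eq)
  then show ?thesis by (rule rc_cong) auto
qed


lemma rc_lift1:
  assumes F: "rcomp 1 (\<lambda>_. True) (\<lambda>ys. F (ys ! 0))" and f: "rcomp k D f"
  shows "rcomp k D (\<lambda>xs. F (f xs))"
proof -
  have "rcomp k D (\<lambda>xs. (\<lambda>ys. F (ys ! 0)) (map (\<lambda>g. g xs) [f]))"
    by (rule rc_cn[OF F]) (auto simp: f)
  then show ?thesis by simp
qed

lemma rc_lift2:
  assumes F: "rcomp 2 (\<lambda>_. True) (\<lambda>ys. F (ys ! 0) (ys ! 1))" and f: "rcomp k D f" and g: "rcomp k D g"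
  shows "rcomp k D (\<lambda>xs. F (f xs) (g xs))"
proof -
  have "rcomp k D (\<lambda>xs. (\<lambda>ys. F (ys ! 0) (ys ! 1)) (map (\<lambda>h. h xs) [f, g]))"
    by (rule rc_cn[OF F]) (auto simp: f g)
  then show ?thesis by simp
qed

lemma rc_lift3:
  assumes F: "rcomp 3 (\<lambda>_. True) (\<lambda>ys. F (ys ! 0) (ys ! 1) (ys ! 2))"
    and f: "rcomp k D f" and g: "rcomp k D g" and h: "rcomp k D h"
  shows "rcomp k D (\<lambda>xs. F (f xs) (g xs) (h xs))"
proof -
  have "rcomp k D (\<lambda>xs. (\<lambda>ys. F (ys ! 0) (ys ! 1) (ys ! 2)) (map (\<lambda>u. u xs) [f, g, h]))"
    by (rule rc_cn[OF F]) (auto simp: f g h)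
  then show ?thesis by (simp add: numeral_3_eq_3)
qed

lemma prec_tri: "prec (\<lambda>_. 0) (\<lambda>ys. Suc (ys ! 0 + ys ! Suc 0)) n xs = triangle n"
  by (induction n) auto

lemma rc_triangle: "rcomp k D f \<Longrightarrow> rcomp k D (\<lambda>xs. triangle (f xs))"
proof (rule rc_lift1[where F=triangle])
  have "rcomp 1 (\<lambda>_. True) (\<lambda>ys. prec (\<lambda>_. 0) (\<lambda>ys. ys ! 0 + Suc (ys ! 1)) (ys ! 0) ys)"
    by (rule rc_prec[OF rc_zero, where E="\<lambda>_. True"]) (auto intro!: rc_add rc_succ rc_proj)
  then show "rcomp 1 (\<lambda>_. True) (\<lambda>ys. triangle (ys ! 0))"
    by (rule rc_cong) (simp add: prec_tri)
qed

definition pdiag :: "nat \<Rightarrow> nat" where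
  "pdiag n = (\<Sum>k<Suc n. of_bool (triangle (Suc k) \<le> n))"
definition pfst :: "nat \<Rightarrow> nat" where "pfst n = n - triangle (pdiag n)"
definition psnd :: "nat \<Rightarrow> nat" where "psnd n = pdiag n - pfst n"

lemma triangle_mono: "a \<le> b \<Longrightarrow> triangle a \<le> triangle b"
  by (induction b) (auto simp: le_Suc_eq)

lemma triangle_ge: "n \<le> triangle n"
  by (induction n) auto

lemma pdiag_enc: "pdiag (triangle s + x) = s" if "x \<le> s"
proof -
  let ?n = "triangle s + x"
  have "triangle (Suc k) \<le> ?n \<longleftrightarrow> k < s" for k
  proof
    assume "triangle (Suc k) \<le> ?n"
    show "k < s"
    proof (rule ccontr)
      assume "\<not> k < s"
      then have "triangle (Suc s) \<le> triangle (Suc k)" by (intro triangle_mono) auto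
      with \<open>triangle (Suc k) \<le> ?n\<close> that show False by simp
    qed
  next
    assume "k < s" then show "triangle (Suc k) \<le> ?n"
      using triangle_mono[of "Suc k" s] by simp
  qed
  then have "pdiag ?n = (\<Sum>k<Suc ?n. of_bool (k < s))" by (simp add: pdiag_def)
  also have "\<dots> = card ({..<Suc ?n} \<inter> {k. k < s})"
    using sum_of_bool_eq[where 'a=nat and A="{..<Suc ?n}" and P="\<lambda>k. k < s"] by (simp del: sum_of_bool_eq)
  also have "{..<Suc ?n} \<inter> {k. k < s} = {..<s}"
    using triangle_ge[of s] by auto
  finally show ?thesis by simp
qed

lemma prod_decode_alt: "prod_decode n = (pfst n, psnd n)"
proof -
  obtain x y where xy: "prod_decode n = (x, y)" by (cases "prod_decode n")
  then have n: "n = triangle (x + y) + x"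
    using prod_decode_inverse[of n] by (simp add: prod_encode_def)
  have "pdiag n = x + y" using n pdiag_enc[of x "x+y"] by simp
  then show ?thesis using xy n by (simp add: pfst_def psnd_def)
qed

lemma rc_pdiag: "rcomp k D f \<Longrightarrow> rcomp k D (\<lambda>xs. pdiag (f xs))"
proof (rule rc_lift1[where F=pdiag])
  have "rcomp 1 (\<lambda>_. True) (\<lambda>xs. \<Sum>i<Suc (xs ! 0). of_bool (triangle (Suc i) \<le> xs ! 0))"
    by (rule rc_sum[where G="\<lambda>ys. of_bool (triangle (Suc (ys ! 0)) \<le> ys ! 1)"])
       (auto intro!: rc_le rc_triangle rc_succ rc_proj simp del: triangle_Suc)
  then show "rcomp 1 (\<lambda>_. True) (\<lambda>ys. pdiag (ys ! 0))"
    by (simp add: pdiag_def)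
qed

lemma rc_pfst: "rcomp k D f \<Longrightarrow> rcomp k D (\<lambda>xs. pfst (f xs))"
  unfolding pfst_def by (intro rc_sub rc_triangle rc_pdiag)
lemma rc_psnd: "rcomp k D f \<Longrightarrow> rcomp k D (\<lambda>xs. psnd (f xs))"
  unfolding psnd_def by (intro rc_sub rc_pfst rc_pdiag)

definition hdc :: "nat \<Rightarrow> nat" where "hdc c = pfst (c - 1)"
definition tlc :: "nat \<Rightarrow> nat" where "tlc c = psnd (c - 1)"

lemma rc_hdc: "rcomp k D f \<Longrightarrow> rcomp k D (\<lambda>xs. hdc (f xs))"
  unfolding hdc_def by (intro rc_pfst rc_sub rc_const)
lemma rc_tlc: "rcomp k D f \<Longrightarrow> rcomp k D (\<lambda>xs. tlc (f xs))"
  unfolding tlc_def by (intro rc_psnd rc_sub rc_const)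

lemma hdc_cons[simp]: "hdc (Suc (prod_encode (x, y))) = x"
  unfolding hdc_def using prod_decode_alt[of "prod_encode (x, y)"] by simp
lemma tlc_cons[simp]: "tlc (Suc (prod_encode (x, y))) = y"
  unfolding tlc_def using prod_decode_alt[of "prod_encode (x, y)"] by simp
lemma pd0: "prod_decode 0 = (0, 0)"
  using prod_encode_inverse[of "(0,0)"] by (simp add: prod_encode_def)
lemma tlc_0[simp]: "tlc 0 = 0"
  using pd0 by (simp add: tlc_def prod_decode_alt)

primrec itl :: "nat \<Rightarrow> nat \<Rightarrow> nat" where
  "itl 0 c = c"
| "itl (Suc i) c = tlc (itl i c)"

lemma prec_itl: "prec (\<lambda>xs. xs ! Suc 0) (\<lambda>ys. tlc (ys ! 0)) i xs = itl i (xs ! 1)"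
  by (induction i) auto

lemma rc_itl: "rcomp k D f \<Longrightarrow> rcomp k D g \<Longrightarrow> rcomp k D (\<lambda>xs. itl (f xs) (g xs))"
proof (rule rc_lift2[where F=itl])
  have "rcomp 2 (\<lambda>_. True) (\<lambda>xs. prec (\<lambda>xs. xs ! 1) (\<lambda>ys. tlc (ys ! 0)) (xs ! 0) xs)"
    by (rule rc_prec[where E="\<lambda>_. True"]) (auto intro!: rc_tlc rc_proj)
  then show "rcomp 2 (\<lambda>_. True) (\<lambda>ys. itl (ys ! 0) (ys ! 1))"
    by (rule rc_cong) (simp add: prec_itl)
qed

lemma itl_enc: "itl i (list_encode xs) = list_encode (drop i xs)"
proof (induction i)
  case (Suc i)
  have d: "drop (Suc i) xs = tl (drop i xs)"
    by (metis drop_Suc tl_drop)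
  show ?case
  proof (cases "drop i xs")
    case Nil
    then show ?thesis using Suc d by simp
  next
    case (Cons y ys)
    then show ?thesis using Suc d by simp
  qed
qed simp

definition nthc :: "nat \<Rightarrow> nat \<Rightarrow> nat" where "nthc c i = hdc (itl i c)"
definition lenc :: "nat \<Rightarrow> nat" where "lenc c = (\<Sum>i<c. of_bool (itl i c \<noteq> 0))"

lemma rc_nthc: "rcomp k D f \<Longrightarrow> rcomp k D g \<Longrightarrow> rcomp k D (\<lambda>xs. nthc (f xs) (g xs))"
  unfolding nthc_def by (intro rc_hdc rc_itl)

lemma rc_lenc: "rcomp k D f \<Longrightarrow> rcomp k D (\<lambda>xs. lenc (f xs))"
proof (rule rc_lift1[where F=lenc])
  have "rcomp 1 (\<lambda>_. True) (\<lambda>xs. \<Sum>i<xs ! 0. of_bool (\<not> itl i (xs ! 0) = 0))"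
    by (rule rc_sum[where G="\<lambda>ys. of_bool (\<not> itl (ys ! 0) (ys ! 1) = 0)"])
       (auto intro!: rc_not rc_eq rc_lt rc_itl rc_proj rc_const)
  then show "rcomp 1 (\<lambda>_. True) (\<lambda>ys. lenc (ys ! 0))"
    by (simp add: lenc_def)
qed

lemma nthc_enc: "i < length xs \<Longrightarrow> nthc (list_encode xs) i = xs ! i"
  by (simp add: nthc_def itl_enc Cons_nth_drop_Suc[symmetric])

lemma length_le_enc: "length xs \<le> list_encode xs"
proof (induction xs)
  case (Cons x xs)
  then show ?case using le_prod_encode_2[of "list_encode xs" x] by simp
qed simp

lemma lenc_enc: "lenc (list_encode xs) = length xs"
proof -
  have "itl i (list_encode xs) \<noteq> 0 \<longleftrightarrow> i < length xs" for i
  proof -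
    have "itl i (list_encode xs) \<noteq> 0 \<longleftrightarrow> drop i xs \<noteq> []"
      by (cases "drop i xs") (simp_all add: itl_enc)
    then show ?thesis by (simp add: not_le)
  qed
  then have "lenc (list_encode xs) = (\<Sum>i<list_encode xs. of_bool (i < length xs))"
    by (simp add: lenc_def)
  also have "\<dots> = card ({..<list_encode xs} \<inter> {i. i < length xs})"
    using sum_of_bool_eq[where 'a=nat and A="{..<list_encode xs}" and P="\<lambda>i. i < length xs"] by (simp del: sum_of_bool_eq)
  also have "{..<list_encode xs} \<inter> {i. i < length xs} = {..<length xs}"
    using length_le_enc[of xs] by auto
  finally show ?thesis by simp
qed

lemma nthc_dec: "i < length (list_decode c) \<Longrightarrow> nthc c i = list_decode c ! i"
  by (metis list_decode_inverse nthc_enc)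
lemma lenc_dec: "lenc c = length (list_decode c)"
  by (metis list_decode_inverse lenc_enc)


definition rw :: "'k::comm_semiring_1 wnwa \<Rightarrow> nat list \<Rightarrow> (nat \<times> nat) set \<Rightarrow> nat list \<Rightarrow> 'k" where
  "rw A w \<nu> qs = iota A (qs ! 0) * (\<Prod>j\<in>{1..length w}. pos_weight A w \<nu> qs j) * kappa A (qs ! length w)"

definition Wit :: "'k::comm_semiring_1 wnwa \<Rightarrow> nat \<Rightarrow> nat \<Rightarrow> bool" where
  "Wit A m L \<longleftrightarrow> (\<exists>w \<nu> qs. (w, \<nu>) \<in> NW m \<and> qs \<in> runs A (length w) \<and> length w = L \<and> rw A w \<nu> qs \<noteq> 0)"

lemma pump:
  fixes A :: "'k::comm_semiring_1 wnwa" and e :: "nat \<Rightarrow> nat"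
  assumes NW: "(w, \<nu>) \<in> NW m" and R: "qs \<in> runs A (length w)" and nz: "rw A w \<nu> qs \<noteq> 0"
    and L': "0 < L'"
    and mono: "\<And>i j. 1 \<le> i \<Longrightarrow> i < j \<Longrightarrow> j \<le> L' \<Longrightarrow> e i < e j"
    and rng: "\<And>j. 1 \<le> j \<Longrightarrow> j \<le> L' \<Longrightarrow> 1 \<le> e j \<and> e j \<le> length w"
    and closed: "\<And>x y. (x, y) \<in> \<nu> \<Longrightarrow> (x \<in> e ` {1..L'}) = (y \<in> e ` {1..L'})"
    and first: "qs ! (e 1 - 1) = qs ! 0"
    and step: "\<And>j. 1 < j \<Longrightarrow> j \<le> L' \<Longrightarrow> qs ! (e j - 1) = qs ! (e (j - 1))"
    and last: "qs ! (e L') = qs ! length w"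
  shows "Wit A m L'"
proof -
  let ?D = "{1..L'}"
  let ?K = "e ` ?D"
  have mono_iff: "e i < e j \<longleftrightarrow> i < j" if "i \<in> ?D" "j \<in> ?D" for i j
  proof (cases i j rule: linorder_cases)
    case less then show ?thesis using mono[of i j] that by auto
  next
    case equal then show ?thesis by auto
  next
    case greater then show ?thesis using mono[of j i] that by auto
  qed
  have inj: "inj_on e ?D"
  proof (rule inj_onI)
    fix x y assume "x \<in> ?D" "y \<in> ?D" "e x = e y"
    then show "x = y" using mono_iff[of x y] mono_iff[of y x] by (cases x y rule: linorder_cases) auto
  qed
  define w' where "w' = map (\<lambda>j. w ! (e (Suc j) - 1)) [0..<L']"
  define qs' where "qs' = qs ! 0 # map (\<lambda>j. qs ! (e (Suc j))) [0..<L']"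
  define \<nu>' where "\<nu>' = {(i, j). i \<in> ?D \<and> j \<in> ?D \<and> (e i, e j) \<in> \<nu>}"
  have lw': "length w' = L'" by (simp add: w'_def)
  have w'_nth: "w' ! (j - 1) = w ! (e j - 1)" if "j \<in> ?D" for j
    using that by (cases j) (auto simp: w'_def)
  have qs'_nth: "qs' ! j = qs ! (e j)" if "j \<in> ?D" for j
    using that by (cases j) (auto simp: qs'_def)
  have qs'_0: "qs' ! 0 = qs ! 0" by (simp add: qs'_def)
  have qs'_pred: "qs' ! (j - 1) = qs ! (e j - 1)" if "j \<in> ?D" for j
  proof (cases "j = 1")
    case True then show ?thesis using first qs'_0 by simp
  next
    case False
    then have "j - 1 \<in> ?D" "1 < j" using that by auto
    then show ?thesis using qs'_nth step[of j] that by auto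
  qed
  from NW have nest: "nesting (length w) \<nu>" and wne: "w \<noteq> []" and wm: "set w \<subseteq> {..<m}"
    by (auto simp: NW_def)
  note nest' = nest[unfolded nesting_def]
  have inK: "x \<in> ?K" if "(x, y) \<in> \<nu>" "y \<in> ?K" for x y using closed[OF that(1)] that(2) by simp
  have inK2: "y \<in> ?K" if "(x, y) \<in> \<nu>" "x \<in> ?K" for x y using closed[OF that(1)] that(2) by simp
  have nest2: "nesting L' \<nu>'"
    unfolding nesting_def
  proof (intro conjI allI impI)
    show "\<nu>' \<subseteq> {1..L'} \<times> {1..L'}" by (auto simp: \<nu>'_def)
  next
    fix i j assume "(i, j) \<in> \<nu>'"
    then have "i \<in> ?D" "j \<in> ?D" "(e i, e j) \<in> \<nu>" by (auto simp: \<nu>'_def)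
    then show "i < j" using nest' mono_iff[of i j] by auto
  next
    fix i j j' assume "(i, j) \<in> \<nu>'" "(i, j') \<in> \<nu>'"
    then have "j \<in> ?D" "j' \<in> ?D" "(e i, e j) \<in> \<nu>" "(e i, e j') \<in> \<nu>" by (auto simp: \<nu>'_def)
    then show "j = j'" using nest' inj_onD[OF inj] by metis
  next
    fix i i' j assume "(i, j) \<in> \<nu>'" "(i', j) \<in> \<nu>'"
    then have "i \<in> ?D" "i' \<in> ?D" "(e i, e j) \<in> \<nu>" "(e i', e j) \<in> \<nu>" by (auto simp: \<nu>'_def)
    then show "i = i'" using nest' inj_onD[OF inj] by metis
  next
    fix i j i' j' assume a: "(i, j) \<in> \<nu>'" "(i', j') \<in> \<nu>'" "i < i'"
    then have D: "i \<in> ?D" "i' \<in> ?D" "j \<in> ?D" "j' \<in> ?D" "(e i, e j) \<in> \<nu>" "(e i', e j') \<in> \<nu>"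
      by (auto simp: \<nu>'_def)
    then have "e i < e i'" using mono_iff a(3) by blast
    then have "e j < e i' \<or> e j' < e j" using nest' D by blast
    then show "j < i' \<or> j' < j" using D mono_iff by blast
  qed
  have wlt: "w ! (e (Suc x) - 1) < m" if "x < L'" for x
  proof -
    have "e (Suc x) - 1 < length w" using rng[of "Suc x"] that by auto
    then show ?thesis using wm nth_mem by blast
  qed
  have NW': "(w', \<nu>') \<in> NW m"
    using nest2 lw' L' wlt by (auto simp: NW_def w'_def)
  have qlt: "qs ! k < nst A" if "k \<le> length w" for k
  proof -
    have "k < length qs" "set qs \<subseteq> {..<nst A}" using R that by (auto simp: runs_def)
    then show ?thesis using nth_mem[of k qs] by blast
  qed
  have qlt2: "qs ! e (Suc x) < nst A" if "x < L'" for x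
    using rng[of "Suc x"] that qlt[of "e (Suc x)"] by simp
  have R': "qs' \<in> runs A (length w')"
    unfolding runs_def qs'_def lw' using qlt[of 0] qlt2 by auto
  have pw: "pos_weight A w' \<nu>' qs' j = pos_weight A w \<nu> qs (e j)" if j: "j \<in> ?D" for j
  proof -
    have ejK: "e j \<in> ?K" using j by blast
    have call: "(\<exists>k. (j, k) \<in> \<nu>') \<longleftrightarrow> (\<exists>k. (e j, k) \<in> \<nu>)"
    proof
      assume "\<exists>k. (j, k) \<in> \<nu>'" then show "\<exists>k. (e j, k) \<in> \<nu>" by (auto simp: \<nu>'_def)
    next
      assume "\<exists>k. (e j, k) \<in> \<nu>"
      then obtain k where k: "(e j, k) \<in> \<nu>" by blast
      then have "k \<in> ?K" using inK2[OF k ejK] by blast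
      then obtain k' where "k' \<in> ?D" "k = e k'" by blast
      then have "(j, k') \<in> \<nu>'" using k j by (simp add: \<nu>'_def)
      then show "\<exists>k. (j, k) \<in> \<nu>'" by blast
    qed
    have ret: "(\<exists>i. (i, j) \<in> \<nu>') \<longleftrightarrow> (\<exists>i. (i, e j) \<in> \<nu>)"
    proof
      assume "\<exists>i. (i, j) \<in> \<nu>'" then show "\<exists>i. (i, e j) \<in> \<nu>" by (auto simp: \<nu>'_def)
    next
      assume "\<exists>i. (i, e j) \<in> \<nu>"
      then obtain k where k: "(k, e j) \<in> \<nu>" by blast
      then have "k \<in> ?K" using inK[OF k ejK] by blast
      then obtain k' where "k' \<in> ?D" "k = e k'" by blast
      then have "(k', j) \<in> \<nu>'" using k j by (simp add: \<nu>'_def)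
      then show "\<exists>i. (i, j) \<in> \<nu>'" by blast
    qed
    have the: "qs' ! ((THE i. (i, j) \<in> \<nu>') - 1) = qs ! ((THE i. (i, e j) \<in> \<nu>) - 1)"
      if ex: "\<exists>i. (i, e j) \<in> \<nu>"
    proof -
      obtain i where i: "(i, e j) \<in> \<nu>" using ex by blast
      then obtain i' where i': "i' \<in> ?D" "e i' = i" using inK[OF i] j by blast
      have t1: "(THE i. (i, e j) \<in> \<nu>) = i" using i nest' by (intro the_equality) auto
      have "(i', j) \<in> \<nu>'" using i i' j by (auto simp: \<nu>'_def)
      then have t2: "(THE i. (i, j) \<in> \<nu>') = i'"
        using nest2 by (intro the_equality) (auto simp: nesting_def)
      show ?thesis using t1 t2 qs'_pred[OF i'(1)] i' by simp
    qed
    show ?thesis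
      unfolding pos_weight_def using call ret the qs'_pred[OF j] qs'_nth[OF j] w'_nth[OF j] by auto
  qed
  have P1: "(\<Prod>j\<in>{1..length w'}. pos_weight A w' \<nu>' qs' j) = (\<Prod>k\<in>?K. pos_weight A w \<nu> qs k)"
    using pw inj by (simp add: lw' prod.reindex)
  have Ksub: "?K \<subseteq> {1..length w}" using rng by auto
  have P2: "(\<Prod>k\<in>{1..length w}. pos_weight A w \<nu> qs k) =
      (\<Prod>k\<in>?K. pos_weight A w \<nu> qs k) * (\<Prod>k\<in>{1..length w} - ?K. pos_weight A w \<nu> qs k)"
    using prod.subset_diff[OF Ksub] by (simp add: mult.commute)
  have "rw A w \<nu> qs = rw A w' \<nu>' qs' * (\<Prod>k\<in>{1..length w} - ?K. pos_weight A w \<nu> qs k)"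
    unfolding rw_def P2 P1 using last qs'_0 qs'_nth[of L'] L' lw' by (simp add: ac_simps)
  then have "rw A w' \<nu>' qs' \<noteq> 0" using nz by auto
  then show ?thesis unfolding Wit_def using NW' R' lw' by blast
qed


lemma pump2:
  fixes A :: "'k::comm_semiring_1 wnwa"
  assumes NW: "(w, \<nu>) \<in> NW m" and R: "qs \<in> runs A (length w)" and nz: "rw A w \<nu> qs \<noteq> 0"
    and abcd: "a \<le> b" "b \<le> c" "c \<le> d" "d \<le> length w"
    and pos: "0 < a + (c - b) + (length w - d)"
    and qab: "qs ! a = qs ! b" and qcd: "qs ! c = qs ! d"
    and closed: "\<And>x y. (x, y) \<in> \<nu> \<Longrightarrow>
        (x \<le> a \<or> (b < x \<and> x \<le> c) \<or> d < x) = (y \<le> a \<or> (b < y \<and> y \<le> c) \<or> d < y)"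
  shows "Wit A m (a + (c - b) + (length w - d))"
proof -
  let ?L = "a + (c - b) + (length w - d)"
  define e where "e j = (if j \<le> a then j else if j \<le> a + (c - b) then j + (b - a) else j + (b - a) + (d - c))" for j
  have img: "e ` {1..?L} = {x. 1 \<le> x \<and> x \<le> length w \<and> (x \<le> a \<or> (b < x \<and> x \<le> c) \<or> d < x)}"
  proof (intro equalityI subsetI)
    fix x assume "x \<in> e ` {1..?L}"
    then obtain j where "j \<in> {1..?L}" "x = e j" by blast
    then show "x \<in> {x. 1 \<le> x \<and> x \<le> length w \<and> (x \<le> a \<or> (b < x \<and> x \<le> c) \<or> d < x)}"
      using abcd by (auto simp: e_def split: if_splits)
  next
    fix x assume x: "x \<in> {x. 1 \<le> x \<and> x \<le> length w \<and> (x \<le> a \<or> (b < x \<and> x \<le> c) \<or> d < x)}"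
    show "x \<in> e ` {1..?L}"
    proof (cases "x \<le> a")
      case True
      then have "e x = x" by (simp add: e_def)
      then show ?thesis using x True by (intro image_eqI[of _ _ x]) auto
    next
      case False
      show ?thesis
      proof (cases "b < x \<and> x \<le> c")
        case True
        then have "e (x - (b - a)) = x" using False abcd unfolding e_def by (auto; arith)
        then show ?thesis using x True False abcd by (intro image_eqI[of _ _ "x - (b - a)"]) auto
      next
        case F2: False
        then have dx: "d < x" using x False by auto
        then have "e (x - (b - a) - (d - c)) = x" using False abcd unfolding e_def by (auto; arith)
        then show ?thesis using x dx False abcd by (intro image_eqI[of _ _ "x - (b - a) - (d - c)"]) auto
      qed
    qed
  qed
  show ?thesis
  proof (rule pump[OF NW R nz pos])
    show "e i < e j" if "1 \<le> i" "i < j" "j \<le> ?L" for i j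
      using that abcd by (auto simp: e_def)
    show "1 \<le> e j \<and> e j \<le> length w" if "1 \<le> j" "j \<le> ?L" for j
      using that abcd by (auto simp: e_def)
    show "(x \<in> e ` {1..?L}) = (y \<in> e ` {1..?L})" if "(x, y) \<in> \<nu>" for x y
    proof -
      have "x \<in> {1..length w}" "y \<in> {1..length w}"
        using NW that by (auto simp: NW_def nesting_def)
      then show ?thesis unfolding img using closed[OF that] by auto
    qed
    show "qs ! (e 1 - 1) = qs ! 0"
    proof (cases "a = 0")
      case a0: True
      show ?thesis
      proof (cases "b < c")
        case True
        then have "e 1 - 1 = b" using a0 by (simp add: e_def)
        then show ?thesis using qab a0 by simp
      next
        case False
        then have "e 1 - 1 = d" "c = b" using a0 abcd by (auto simp: e_def)
        then show ?thesis using qab qcd a0 by simp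
      qed
    next
      case False
      then show ?thesis by (simp add: e_def)
    qed
    show "qs ! (e j - 1) = qs ! (e (j - 1))" if "1 < j" "j \<le> ?L" for j
    proof -
      consider (A) "j \<le> a" | (B) "a < j" "j \<le> a + (c - b)" | (C) "a + (c - b) < j" by linarith
      then show ?thesis
      proof cases
        case A then show ?thesis by (simp add: e_def)
      next
        case B
        then have ej: "e j = j + (b - a)" by (simp add: e_def)
        show ?thesis
        proof (cases "j - 1 \<le> a")
          case True
          then have "j - 1 = a" using B by linarith
          then have "e (j - 1) = a" "e j - 1 = b" using ej abcd that by (auto simp: e_def)
          then show ?thesis using qab by simp
        next
          case False
          then have "e (j - 1) = j - 1 + (b - a)" using B by (simp add: e_def)
          then show ?thesis using ej B False by simp
        qed
      next
        case C
        then have ej: "e j = j + (b - a) + (d - c)" by (simp add: e_def)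
        show ?thesis
        proof (cases "j - 1 \<le> a")
          case True
          then have "j - 1 = a" "c = b" using C that abcd by linarith+
          then have "e (j - 1) = a" "e j - 1 = d" using ej abcd that by (auto simp: e_def)
          then show ?thesis using qab qcd \<open>c = b\<close> by simp
        next
          case False
          show ?thesis
          proof (cases "j - 1 \<le> a + (c - b)")
            case True
            then have "j - 1 = a + (c - b)" using C by linarith
            then have jj: "j - 1 = a + (c - b)" .
            have "e (j - 1) = c" using jj abcd False that by (auto simp: e_def)
            moreover have "e j - 1 = d" unfolding ej using jj abcd that by arith
            ultimately have "e (j - 1) = c" "e j - 1 = d" by auto
            then show ?thesis using qcd by simp
          next
            case F2: False
            then have "e (j - 1) = j - 1 + (b - a) + (d - c)" using False by (simp add: e_def)
            then show ?thesis using ej C by simp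
          qed
        qed
      qed
    qed
    show "qs ! (e ?L) = qs ! length w"
    proof (cases "d < length w")
      case True
      then have n1: "\<not> ?L \<le> a + (c - b)" "\<not> ?L \<le> a" by auto
      then have "e ?L = ?L + (b - a) + (d - c)" by (simp add: e_def)
      also have "\<dots> = length w" using abcd True by simp
      finally have "e ?L = length w" .
      then show ?thesis by simp
    next
      case dl: False
      then have dl: "d = length w" using abcd by simp
      show ?thesis
      proof (cases "b < c")
        case True
        then have n1: "?L = a + (c - b)" "\<not> ?L \<le> a" using dl by auto
        then have "e ?L = a + (c - b) + (b - a)" by (simp add: e_def)
        also have "\<dots> = c" using abcd True by simp
        finally have "e ?L = c" .
        then show ?thesis using qcd dl by simp
      next
        case False
        then have cb: "c = b" using abcd by simp
        then have "?L = a" using dl by simp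
        then have "e ?L = a" by (simp add: e_def)
        note this cb
        then show ?thesis using qcd qab dl by simp
      qed
    qed
  qed
qed


definition opn :: "(nat \<times> nat) set \<Rightarrow> nat \<Rightarrow> nat set" where
  "opn \<nu> i = {c. \<exists>r. (c, r) \<in> \<nu> \<and> c \<le> i \<and> i < r}"

lemma nest_facts:
  assumes "nesting n \<nu>"
  shows nest_lt: "(i, j) \<in> \<nu> \<Longrightarrow> i < j"
    and nest_fun: "(i, j) \<in> \<nu> \<Longrightarrow> (i, j') \<in> \<nu> \<Longrightarrow> j = j'"
    and nest_inj: "(i, j) \<in> \<nu> \<Longrightarrow> (i', j) \<in> \<nu> \<Longrightarrow> i = i'"
    and nest_cross: "(i, j) \<in> \<nu> \<Longrightarrow> (i', j') \<in> \<nu> \<Longrightarrow> i < i' \<Longrightarrow> j < i' \<or> j' < j"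
    and nest_rng: "(i, j) \<in> \<nu> \<Longrightarrow> 1 \<le> i \<and> j \<le> n"
proof -
  note d = assms[unfolded nesting_def]
  show "(i, j) \<in> \<nu> \<Longrightarrow> i < j" using d by blast
  show "(i, j) \<in> \<nu> \<Longrightarrow> (i, j') \<in> \<nu> \<Longrightarrow> j = j'" using d by blast
  show "(i, j) \<in> \<nu> \<Longrightarrow> (i', j) \<in> \<nu> \<Longrightarrow> i = i'" using d by blast
  show "(i, j) \<in> \<nu> \<Longrightarrow> (i', j') \<in> \<nu> \<Longrightarrow> i < i' \<Longrightarrow> j < i' \<or> j' < j" using d by blast
  show "(i, j) \<in> \<nu> \<Longrightarrow> 1 \<le> i \<and> j \<le> n" using d by auto
qed

lemma call_not_ret:
  assumes "nesting n \<nu>" "(c, r) \<in> \<nu>" "(x, c) \<in> \<nu>" shows False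
  using nest_cross[OF assms(1) assms(3) assms(2)] nest_lt[OF assms(1) assms(3)] nest_lt[OF assms(1) assms(2)]
  by auto

lemma wm_pair:
  assumes N: "nesting n \<nu>" and cr: "(c, r) \<in> \<nu>" and xy: "(x, y) \<in> \<nu>"
  shows "(c \<le> x \<and> x \<le> r) \<longleftrightarrow> (c \<le> y \<and> y \<le> r)"
proof -
  have cr_lt: "c < r" and xy_lt: "x < y" using nest_lt[OF N] cr xy by auto
  show ?thesis
  proof (cases "x = c")
    case True
    then have "y = r" using nest_fun[OF N cr] xy by simp
    then show ?thesis using True cr_lt by simp
  next
    case xc: False
    show ?thesis
    proof (cases "y = r")
      case True
      then have "x = c" using nest_inj[OF N cr] xy by simp
      then show ?thesis using xc by simp
    next
      case yr: False
      have h0: "x \<noteq> r" using call_not_ret[OF N xy] cr by auto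
      have h0': "y \<noteq> c" using call_not_ret[OF N cr] xy by auto
      have h1: "c < x \<Longrightarrow> r < x \<or> y < r" using nest_cross[OF N cr xy] by simp
      have h2: "x < c \<Longrightarrow> y < c \<or> r < y" using nest_cross[OF N xy cr] by simp
      show ?thesis
      proof
        assume "c \<le> x \<and> x \<le> r"
        then have "c < x" "x < r" using xc h0 by auto
        then show "c \<le> y \<and> y \<le> r" using h1 xy_lt yr by linarith
      next
        assume "c \<le> y \<and> y \<le> r"
        then have "c < y" "y < r" using yr h0' by auto
        then show "c \<le> x \<and> x \<le> r"
        proof -
          have "\<not> x < c" using h2 \<open>c < y\<close> \<open>y < r\<close> by linarith
          then show ?thesis using xy_lt \<open>y < r\<close> by linarith
        qed
      qed
    qed
  qed
qed

lemma wm_opn: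
  assumes N: "nesting n \<nu>" and ab: "a < b" and eq: "opn \<nu> a = opn \<nu> b" and xy: "(x, y) \<in> \<nu>"
  shows "(a < x \<and> x \<le> b) \<longleftrightarrow> (a < y \<and> y \<le> b)"
proof -
  have xy_lt: "x < y" using nest_lt[OF N xy] .
  have "\<not> (a < x \<and> x \<le> b \<and> b < y)"
  proof
    assume h: "a < x \<and> x \<le> b \<and> b < y"
    then have "x \<in> opn \<nu> b" using xy by (auto simp: opn_def)
    then have "x \<in> opn \<nu> a" using eq by simp
    then show False using h by (auto simp: opn_def)
  qed
  moreover have "\<not> (x \<le> a \<and> a < y \<and> y \<le> b)"
  proof
    assume h: "x \<le> a \<and> a < y \<and> y \<le> b"
    then have "x \<in> opn \<nu> a" using xy by (auto simp: opn_def)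
    then have "x \<in> opn \<nu> b" using eq by simp
    then obtain r where "(x, r) \<in> \<nu>" "b < r" by (auto simp: opn_def)
    then show False using h nest_fun[OF N xy] by auto
  qed
  ultimately show ?thesis using xy_lt by auto
qed

definition ret :: "(nat \<times> nat) set \<Rightarrow> nat \<Rightarrow> nat" where
  "ret \<nu> c = (THE r. (c, r) \<in> \<nu>)"

lemma ret_eq: "nesting n \<nu> \<Longrightarrow> (c, r) \<in> \<nu> \<Longrightarrow> ret \<nu> c = r"
  unfolding ret_def using nest_fun by (intro the_equality) auto

lemma opn_ret: "nesting n \<nu> \<Longrightarrow> c \<in> opn \<nu> i \<Longrightarrow> (c, ret \<nu> c) \<in> \<nu> \<and> c \<le> i \<and> i < ret \<nu> c"
  unfolding opn_def using ret_eq by fastforce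

lemma opn_chain:
  assumes N: "nesting n \<nu>" and c: "c \<in> opn \<nu> i" and c': "c' \<in> opn \<nu> i" and lt: "c < c'"
  shows "ret \<nu> c' < ret \<nu> c"
  using nest_cross[OF N opn_ret[OF N c, THEN conjunct1] opn_ret[OF N c', THEN conjunct1] lt]
    opn_ret[OF N c] opn_ret[OF N c'] by auto

lemma opn_pred:
  assumes N: "nesting n \<nu>" and c: "c \<in> opn \<nu> i"
  shows "opn \<nu> (c - 1) = {x \<in> opn \<nu> i. x < c}"
proof -
  have cr: "(c, ret \<nu> c) \<in> \<nu>" "c \<le> i" "i < ret \<nu> c" using opn_ret[OF N c] by auto
  have c1: "1 \<le> c" using nest_rng[OF N cr(1)] by auto
  show ?thesis
  proof (intro equalityI subsetI)
    fix x assume "x \<in> opn \<nu> (c - 1)"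
    then obtain r where xr: "(x, r) \<in> \<nu>" "x \<le> c - 1" "c - 1 < r" by (auto simp: opn_def)
    have "r \<noteq> c" using call_not_ret[OF N cr(1)] xr(1) by auto
    then have "c < r" using xr by auto
    have "x < c" using xr c1 by auto
    then have "r < c \<or> ret \<nu> c < r" using nest_cross[OF N xr(1) cr(1)] by auto
    then have "i < r" using \<open>c < r\<close> cr by auto
    then show "x \<in> {x \<in> opn \<nu> i. x < c}" using xr \<open>x < c\<close> cr by (auto simp: opn_def)
  next
    fix x assume x: "x \<in> {x \<in> opn \<nu> i. x < c}"
    then have xi: "x \<in> opn \<nu> i" "x < c" by auto
    have "ret \<nu> x < c \<or> ret \<nu> c < ret \<nu> x"
      using nest_cross[OF N opn_ret[OF N xi(1), THEN conjunct1] cr(1) xi(2)] .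
    moreover have "c < ret \<nu> x" using opn_ret[OF N xi(1)] cr by linarith
    ultimately have "ret \<nu> c < ret \<nu> x" by linarith
    then show "x \<in> opn \<nu> (c - 1)"
      using opn_ret[OF N xi(1)] xi(2) cr unfolding opn_def by (intro CollectI exI[of _ "ret \<nu> x"]) auto
  qed
qed

lemma finite_opn: "finite (opn \<nu> i)"
  by (rule finite_subset[of _ "{..i}"]) (auto simp: opn_def)

lemma sorted_take_set:
  fixes xs :: "nat list"
  assumes s: "sorted_wrt (<) xs" and j: "j < length xs"
  shows "set (take j xs) = {x \<in> set xs. x < xs ! j}"
proof (intro equalityI subsetI)
  fix x assume "x \<in> set (take j xs)"
  then obtain l where "l < j" "x = xs ! l" using j by (auto simp: in_set_conv_nth)
  then show "x \<in> {x \<in> set xs. x < xs ! j}" using sorted_wrt_nth_less[OF s] j by auto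
next
  fix x assume "x \<in> {x \<in> set xs. x < xs ! j}"
  then obtain l where l: "l < length xs" "x = xs ! l" "xs ! l < xs ! j" by (auto simp: in_set_conv_nth)
  have "l < j"
  proof (rule ccontr)
    assume "\<not> l < j"
    then have "j \<le> l" by simp
    have "xs ! j \<le> xs ! l"
    proof (cases "j = l")
      case True then show ?thesis by simp
    next
      case False
      then have "j < l" using \<open>j \<le> l\<close> by simp
      then show ?thesis using sorted_wrt_nth_less[OF s \<open>j < l\<close> l(1)] by simp
    qed
    then show False using l by simp
  qed
  then show "x \<in> set (take j xs)" using l j by (auto simp: in_set_conv_nth)
qed


lemma pumpA:
  fixes A :: "'k::comm_semiring_1 wnwa"
  assumes NW: "(w, \<nu>) \<in> NW m" and R: "qs \<in> runs A (length w)" and nz: "rw A w \<nu> qs \<noteq> 0"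
    and ab: "a < b" "b \<le> length w" and pos: "0 < a \<or> b < length w"
    and q: "qs ! a = qs ! b" and o: "opn \<nu> a = opn \<nu> b"
  shows "Wit A m (a + (length w - b))"
proof -
  have N: "nesting (length w) \<nu>" using NW by (simp add: NW_def)
  have "Wit A m (a + (b - b) + (length w - b))"
  proof (rule pump2[OF NW R nz])
    show "a \<le> b" "b \<le> b" "b \<le> b" "b \<le> length w" using ab by auto
    show "0 < a + (b - b) + (length w - b)" using pos by auto
    show "qs ! a = qs ! b" "qs ! b = qs ! b" using q by auto
    show "(x \<le> a \<or> b < x \<and> x \<le> b \<or> b < x) = (y \<le> a \<or> b < y \<and> y \<le> b \<or> b < y)"
      if "(x, y) \<in> \<nu>" for x y
      using wm_opn[OF N ab(1) o that] by auto
  qed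
  then show ?thesis by simp
qed

lemma pumpB:
  fixes A :: "'k::comm_semiring_1 wnwa"
  assumes NW: "(w, \<nu>) \<in> NW m" and R: "qs \<in> runs A (length w)" and nz: "rw A w \<nu> qs \<noteq> 0"
    and c12: "c1 < c2" and p1: "(c1, r1) \<in> \<nu>" and p2: "(c2, r2) \<in> \<nu>" and r12: "r2 < r1"
    and q1: "qs ! (c1 - 1) = qs ! (c2 - 1)" and q2: "qs ! r2 = qs ! r1"
  shows "Wit A m (c1 - 1 + (r2 - (c2 - 1)) + (length w - r1))"
proof (rule pump2[OF NW R nz])
  have N: "nesting (length w) \<nu>" using NW by (simp add: NW_def)
  have r: "1 \<le> c1" "1 \<le> c2" "r1 \<le> length w" "c2 < r2"
    using nest_rng[OF N p1] nest_rng[OF N p2] nest_lt[OF N p2] by auto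
  show "c1 - 1 \<le> c2 - 1" "c2 - 1 \<le> r2" "r2 \<le> r1" "r1 \<le> length w" using r c12 r12 by auto
  show "0 < c1 - 1 + (r2 - (c2 - 1)) + (length w - r1)" using r by auto
  show "qs ! (c1 - 1) = qs ! (c2 - 1)" "qs ! r2 = qs ! r1" using q1 q2 .
  show "(x \<le> c1 - 1 \<or> c2 - 1 < x \<and> x \<le> r2 \<or> r1 < x) = (y \<le> c1 - 1 \<or> c2 - 1 < y \<and> y \<le> r2 \<or> r1 < y)"
    if xy: "(x, y) \<in> \<nu>" for x y
  proof -
    have e1: "(c1 \<le> x \<and> x \<le> r1) = (c1 \<le> y \<and> y \<le> r1)" by (rule wm_pair[OF N p1 xy])
    have e2: "(c2 \<le> x \<and> x \<le> r2) = (c2 \<le> y \<and> y \<le> r2)" by (rule wm_pair[OF N p2 xy])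
    have k: "(z \<le> c1 - 1 \<or> c2 - 1 < z \<and> z \<le> r2 \<or> r1 < z) = (\<not> (c1 \<le> z \<and> z \<le> r1) \<or> (c2 \<le> z \<and> z \<le> r2))"
      for z using r c12 r12 by auto
    show ?thesis unfolding k using e1 e2 by blast
  qed
qed

lemma pair_code_lt: "(a::nat) < n \<Longrightarrow> b < n \<Longrightarrow> a * n + b < n * n"
proof -
  assume "a < n" "b < n"
  then have "a * n + b < a * n + n" by simp
  also have "\<dots> = Suc a * n" by simp
  also have "\<dots> \<le> n * n" using \<open>a < n\<close> by (intro mult_right_mono) auto
  finally show ?thesis .
qed

lemma pair_code_inj: "(b::nat) < n \<Longrightarrow> b' < n \<Longrightarrow> a * n + b = a' * n + b' \<Longrightarrow> a = a' \<and> b = b'"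
proof -
  assume h: "b < n" "b' < n" "a * n + b = a' * n + b'"
  have "b = (a * n + b) mod n" using h(1) by simp
  moreover have "b' = (a' * n + b') mod n" using h(2) by simp
  ultimately have bb: "b = b'" using h(3) by simp
  then have "a * n = a' * n" using h by simp
  then have "a = a'" using h by (cases "n = 0") auto
  then show ?thesis using bb by simp
qed


lemma short_wit_aux:
  fixes A :: "'k::comm_semiring_1 wnwa"
  assumes NW: "(w, \<nu>) \<in> NW m" and R: "qs \<in> runs A (length w)" and nz: "rw A w \<nu> qs \<noteq> 0"
    and min: "\<And>L'. L' < length w \<Longrightarrow> \<not> Wit A m L'"
  shows "length w \<le> nst A * (nst A * nst A + 1) * (nst A * nst A) ^ (nst A * nst A)"
proof -
  let ?n = "nst A" and ?N = "nst A * nst A" and ?len = "length w"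
  have N: "nesting ?len \<nu>" using NW by (simp add: NW_def)
  have qlen: "length qs = Suc ?len" and qset: "set qs \<subseteq> {..<?n}" using R by (auto simp: runs_def)
  have qlt: "qs ! k < ?n" if "k \<le> ?len" for k
  proof -
    have "k < length qs" using qlen that by simp
    then show ?thesis using qset nth_mem[of k qs] by blast
  qed
  define pr where "pr c = qs ! (c - 1) * ?n + qs ! (ret \<nu> c)" for c
  define cs where "cs i = sorted_list_of_set (opn \<nu> i)" for i
  define pl where "pl i = map pr (cs i)" for i
  define sig where "sig i = (qs ! i, length (pl i), pl i @ replicate (?N - length (pl i)) 0)" for i
  have cs_set: "set (cs i) = opn \<nu> i" for i by (simp add: cs_def finite_opn)
  have cs_sorted: "sorted_wrt (<) (cs i)" for i by (simp add: cs_def strict_sorted_list_of_set)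
  have opn_info: "(c, ret \<nu> c) \<in> \<nu> \<and> 1 \<le> c \<and> c \<le> i \<and> i < ret \<nu> c \<and> ret \<nu> c \<le> ?len"
    if "c \<in> opn \<nu> i" for c i
    using opn_ret[OF N that] nest_rng[OF N, of c "ret \<nu> c"] by auto
  have pr_lt: "pr c < ?N" if "c \<in> opn \<nu> i" for c i
    unfolding pr_def using opn_info[OF that] by (intro pair_code_lt qlt) auto
  have pr_inj: "qs ! (c - 1) = qs ! (c' - 1) \<and> qs ! (ret \<nu> c) = qs ! (ret \<nu> c')"
    if "c \<in> opn \<nu> i" "c' \<in> opn \<nu> i'" "pr c = pr c'" for c c' i i'
    using pair_code_inj[OF qlt qlt, of "ret \<nu> c" "ret \<nu> c'" "qs ! (c - 1)" "qs ! (c' - 1)"]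
      opn_info[OF that(1)] opn_info[OF that(2)] that(3) by (auto simp: pr_def)
  have dist: "distinct (pl i)" for i
  proof (rule ccontr)
    assume "\<not> distinct (pl i)"
    then obtain j l where jl: "j < length (pl i)" "l < length (pl i)" "j \<noteq> l" "pl i ! j = pl i ! l"
      by (auto simp: distinct_conv_nth)
    have "\<exists>j l. j < l \<and> l < length (cs i) \<and> pr (cs i ! j) = pr (cs i ! l)"
    proof (cases "j < l")
      case True
      then show ?thesis using jl by (intro exI[of _ j] exI[of _ l]) (auto simp: pl_def)
    next
      case False
      then have "l < j" using jl(3) by simp
      then show ?thesis using jl by (intro exI[of _ l] exI[of _ j]) (auto simp: pl_def)
    qed
    then obtain j l where jl: "j < l" "l < length (cs i)" "pr (cs i ! j) = pr (cs i ! l)" by blast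
    define c1 where "c1 = cs i ! j"
    define c2 where "c2 = cs i ! l"
    have c12: "c1 < c2" unfolding c1_def c2_def using sorted_wrt_nth_less[OF cs_sorted jl(1,2)] .
    have in1: "c1 \<in> opn \<nu> i" unfolding c1_def using jl cs_set nth_mem[of j "cs i"] by auto
    have in2: "c2 \<in> opn \<nu> i" unfolding c2_def using jl cs_set nth_mem[of l "cs i"] by auto
    have r12: "ret \<nu> c2 < ret \<nu> c1" using opn_chain[OF N in1 in2 c12] .
    have qq: "qs ! (c1 - 1) = qs ! (c2 - 1) \<and> qs ! (ret \<nu> c1) = qs ! (ret \<nu> c2)"
      using pr_inj[OF in1 in2] jl(3) by (simp add: c1_def c2_def)
    have W: "Wit A m (c1 - 1 + (ret \<nu> c2 - (c2 - 1)) + (?len - ret \<nu> c1))"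
      by (rule pumpB[OF NW R nz c12]) (use opn_info[OF in1] opn_info[OF in2] r12 qq in auto)
    have "c1 - 1 + (ret \<nu> c2 - (c2 - 1)) + (?len - ret \<nu> c1) < ?len"
      using opn_info[OF in1] opn_info[OF in2] r12 c12 by auto
    then show False using min W by blast
  qed
  have len_pl: "length (pl i) \<le> ?N" for i
  proof -
    have "set (pl i) \<subseteq> {..<?N}" using pr_lt cs_set by (auto simp: pl_def)
    then have "card (set (pl i)) \<le> ?N" using card_mono[of "{..<?N}" "set (pl i)"] by simp
    then show ?thesis using distinct_card[OF dist[of i]] by simp
  qed
  have noeq: False if ii: "1 \<le> i" "i < i'" "i' \<le> ?len" "sig i = sig i'" for i i'
  proof -
    have qi: "qs ! i = qs ! i'" and li: "length (pl i) = length (pl i')"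
      and "pl i @ replicate (?N - length (pl i)) 0 = pl i' @ replicate (?N - length (pl i')) 0"
      using ii(4) by (auto simp: sig_def)
    then have pli: "pl i = pl i'" by simp
    have lcs: "length (cs i) = length (cs i')" using li by (simp add: pl_def)
    show False
    proof (cases "cs i = cs i'")
      case True
      then have "opn \<nu> i = opn \<nu> i'" using cs_set by metis
      then have W: "Wit A m (i + (?len - i'))" using pumpA[OF NW R nz ii(2,3) _ qi] ii(1) by auto
      have "i + (?len - i') < ?len" using ii by auto
      then show False using min W by blast
    next
      case False
      then have "\<exists>j < length (cs i). cs i ! j \<noteq> cs i' ! j" using lcs nth_equalityI by blast
      define j0 where "j0 = (LEAST j. j < length (cs i) \<and> cs i ! j \<noteq> cs i' ! j)"
      have j0: "j0 < length (cs i)" "cs i ! j0 \<noteq> cs i' ! j0"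
        using LeastI_ex[OF \<open>\<exists>j < length (cs i). cs i ! j \<noteq> cs i' ! j\<close>] by (auto simp: j0_def)
      have before: "cs i ! l = cs i' ! l" if "l < j0" for l
        using not_less_Least[of l "\<lambda>j. j < length (cs i) \<and> cs i ! j \<noteq> cs i' ! j"] that j0
        by (auto simp: j0_def)
      have tk: "take j0 (cs i) = take j0 (cs i')"
        using before j0 lcs by (intro nth_equalityI) auto
      define c where "c = cs i ! j0"
      define c' where "c' = cs i' ! j0"
      have inc: "c \<in> opn \<nu> i" unfolding c_def using j0 cs_set nth_mem[of j0 "cs i"] by auto
      have inc': "c' \<in> opn \<nu> i'" unfolding c'_def using j0 lcs cs_set nth_mem[of j0 "cs i'"] by auto
      have o1: "opn \<nu> (c - 1) = set (take j0 (cs i))"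
        using opn_pred[OF N inc] sorted_take_set[OF cs_sorted j0(1)] cs_set by (simp add: c_def)
      have o2: "opn \<nu> (c' - 1) = set (take j0 (cs i'))"
        using opn_pred[OF N inc'] sorted_take_set[OF cs_sorted, of j0 i'] j0(1) lcs cs_set by (simp add: c'_def)
      have oo: "opn \<nu> (c - 1) = opn \<nu> (c' - 1)" using o1 o2 tk by simp
      have "map pr (cs i) ! j0 = map pr (cs i') ! j0" using pli by (simp add: pl_def)
      then have "pr c = pr c'" using j0(1) lcs by (simp add: c_def c'_def)
      then have qq: "qs ! (c - 1) = qs ! (c' - 1)" using pr_inj[OF inc inc'] by simp
      have cc: "c \<noteq> c'" using j0(2) by (simp add: c_def c'_def)
      have bnd: "1 \<le> c" "c < ?len" "1 \<le> c'" "c' < ?len"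
        using opn_info[OF inc] opn_info[OF inc'] by auto
      show False
      proof (cases "c < c'")
        case True
        have W: "Wit A m (c - 1 + (?len - (c' - 1)))"
          by (rule pumpA[OF NW R nz]) (use True bnd qq oo in auto)
        have "c - 1 + (?len - (c' - 1)) < ?len" using True bnd by auto
        then show False using min W by blast
      next
        case False
        then have lt: "c' < c" using cc by simp
        have W: "Wit A m (c' - 1 + (?len - (c - 1)))"
          by (rule pumpA[OF NW R nz]) (use lt bnd qq oo in auto)
        have "c' - 1 + (?len - (c - 1)) < ?len" using lt bnd by auto
        then show False using min W by blast
      qed
    qed
  qed
  have inj: "inj_on sig {1..?len}"
  proof (rule inj_onI)
    fix i i' assume "i \<in> {1..?len}" "i' \<in> {1..?len}" "sig i = sig i'"
    then show "i = i'" using noeq[of i i'] noeq[of i' i] by (cases i i' rule: linorder_cases) auto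
  qed
  define S where "S = {..<?n} \<times> {..?N} \<times> {xs. set xs \<subseteq> {..<?N} \<and> length xs = ?N}"
  have sub: "sig ` {1..?len} \<subseteq> S"
  proof
    fix x assume "x \<in> sig ` {1..?len}"
    then obtain i where i: "i \<in> {1..?len}" "x = sig i" by blast
    have "set (pl i) \<subseteq> {..<?N}" using pr_lt cs_set by (auto simp: pl_def)
    then show "x \<in> S" using i qlt[of i] len_pl[of i] by (auto simp: S_def sig_def)
  qed
  have cardS: "card S = ?n * (?N + 1) * ?N ^ ?N"
    unfolding S_def card_cartesian_product by (simp add: card_lists_length_eq del: mult_Suc)
  have "?len = card (sig ` {1..?len})" using card_image[OF inj] by simp
  also have "\<dots> \<le> card S"
  proof -
    have "finite S" by (simp add: S_def finite_lists_length_eq)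
    then show ?thesis using card_mono sub by blast
  qed
  finally show ?thesis using cardS by (simp add: mult.assoc)
qed

theorem short_wit:
  fixes A :: "'k::comm_semiring_1 wnwa"
  assumes "Wit A m L"
  shows "\<exists>L'. L' \<le> nst A * (nst A * nst A + 1) * (nst A * nst A) ^ (nst A * nst A) \<and> Wit A m L'"
proof -
  define L0 where "L0 = (LEAST L. Wit A m L)"
  have W0: "Wit A m L0" using LeastI[of "Wit A m", OF assms] by (simp add: L0_def)
  have min: "\<not> Wit A m L'" if "L' < L0" for L' using not_less_Least[of L' "Wit A m"] that by (simp add: L0_def)
  obtain w \<nu> qs where w: "(w, \<nu>) \<in> NW m" "qs \<in> runs A (length w)" "length w = L0" "rw A w \<nu> qs \<noteq> 0"
    using W0 unfolding Wit_def by blast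
  have "L0 \<le> nst A * (nst A * nst A + 1) * (nst A * nst A) ^ (nst A * nst A)"
    using short_wit_aux[OF w(1,2,4)] min w(3) by auto
  then show ?thesis using W0 by blast
qed


definition nuof :: "nat list \<Rightarrow> (nat \<times> nat) set" where
  "nuof pl = {(j, pl ! (j - 1)) | j. 1 \<le> j \<and> j \<le> length pl \<and> j < pl ! (j - 1)}"

definition plvalid :: "nat list \<Rightarrow> bool" where
  "plvalid pl \<longleftrightarrow> (\<forall>k<length pl. pl ! k \<le> length pl \<and> pl ! k \<noteq> Suc k \<and>
     (pl ! k \<noteq> 0 \<longrightarrow> pl ! (pl ! k - 1) = Suc k) \<and>
     (\<forall>l<length pl. k < l \<longrightarrow> Suc k < pl ! k \<longrightarrow> Suc l < pl ! l \<longrightarrow> pl ! l < pl ! k \<or> pl ! k < Suc l))"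

lemma nuof_iff: "(i, j) \<in> nuof pl \<longleftrightarrow> 1 \<le> i \<and> i \<le> length pl \<and> i < pl ! (i - 1) \<and> j = pl ! (i - 1)"
  unfolding nuof_def by auto

lemma plvalid_D:
  assumes "plvalid pl" "k < length pl"
  shows "pl ! k \<le> length pl" "pl ! k \<noteq> Suc k" "pl ! k \<noteq> 0 \<Longrightarrow> pl ! (pl ! k - 1) = Suc k"
    "l < length pl \<Longrightarrow> k < l \<Longrightarrow> Suc k < pl ! k \<Longrightarrow> Suc l < pl ! l \<Longrightarrow> pl ! l < pl ! k \<or> pl ! k < Suc l"
  using assms unfolding plvalid_def by blast+

lemma plvalid_nesting:
  assumes V: "plvalid pl"
  shows "nesting (length pl) (nuof pl)"
  unfolding nesting_def
proof (intro conjI allI impI)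
  show "nuof pl \<subseteq> {1..length pl} \<times> {1..length pl}"
  proof
    fix x assume "x \<in> nuof pl"
    then obtain i where i: "x = (i, pl ! (i - 1))" "1 \<le> i" "i \<le> length pl" "i < pl ! (i - 1)"
      unfolding nuof_def by blast
    have "pl ! (i - 1) \<le> length pl" using plvalid_D(1)[OF V, of "i - 1"] i by auto
    then show "x \<in> {1..length pl} \<times> {1..length pl}" using i by auto
  qed
next
  fix i j assume "(i, j) \<in> nuof pl" then show "i < j" by (simp add: nuof_iff)
next
  fix i j j' assume "(i, j) \<in> nuof pl" "(i, j') \<in> nuof pl" then show "j = j'" by (simp add: nuof_iff)
next
  fix i i' j assume a: "(i, j) \<in> nuof pl" "(i', j) \<in> nuof pl"
  then have h: "1 \<le> i" "i \<le> length pl" "j = pl ! (i - 1)" "1 \<le> i'" "i' \<le> length pl" "j = pl ! (i' - 1)"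
    "i < j" by (auto simp: nuof_iff)
  have "pl ! (pl ! (i - 1) - 1) = Suc (i - 1)" using plvalid_D(3)[OF V, of "i - 1"] h by auto
  moreover have "pl ! (pl ! (i' - 1) - 1) = Suc (i' - 1)" using plvalid_D(3)[OF V, of "i' - 1"] h by auto
  ultimately show "i = i'" using h by auto
next
  fix i j i' j' assume a: "(i, j) \<in> nuof pl" "(i', j') \<in> nuof pl" "i < i'"
  then have h: "1 \<le> i" "i \<le> length pl" "j = pl ! (i - 1)" "i < j"
    "1 \<le> i'" "i' \<le> length pl" "j' = pl ! (i' - 1)" "i' < j'" by (auto simp: nuof_iff)
  have "pl ! (i' - 1) < pl ! (i - 1) \<or> pl ! (i - 1) < Suc (i' - 1)"
    using plvalid_D(4)[OF V, of "i - 1" "i' - 1"] h a(3) by auto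
  then show "j < i' \<or> j' < j" using h by auto
qed

lemma nuof_call: "plvalid pl \<Longrightarrow> 1 \<le> j \<Longrightarrow> j \<le> length pl \<Longrightarrow> (\<exists>k. (j, k) \<in> nuof pl) \<longleftrightarrow> j < pl ! (j - 1)"
  by (auto simp: nuof_iff)

lemma nuof_ret:
  assumes V: "plvalid pl" and j: "1 \<le> j" "j \<le> length pl"
  shows "(\<exists>i. (i, j) \<in> nuof pl) \<longleftrightarrow> 0 < pl ! (j - 1) \<and> pl ! (j - 1) < j"
proof
  assume "\<exists>i. (i, j) \<in> nuof pl"
  then obtain i where h: "1 \<le> i" "i \<le> length pl" "i < pl ! (i - 1)" "j = pl ! (i - 1)"
    by (auto simp: nuof_iff)
  have "pl ! (pl ! (i - 1) - 1) = Suc (i - 1)" using plvalid_D(3)[OF V, of "i - 1"] h by auto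
  then show "0 < pl ! (j - 1) \<and> pl ! (j - 1) < j" using h by auto
next
  assume h: "0 < pl ! (j - 1) \<and> pl ! (j - 1) < j"
  let ?i = "pl ! (j - 1)"
  have "pl ! (?i - 1) = Suc (j - 1)" using plvalid_D(3)[OF V, of "j - 1"] h j by auto
  then have "(?i, j) \<in> nuof pl" using h j by (auto simp: nuof_iff)
  then show "\<exists>i. (i, j) \<in> nuof pl" by blast
qed

lemma nuof_the:
  assumes V: "plvalid pl" and j: "1 \<le> j" "j \<le> length pl" and h: "0 < pl ! (j - 1)" "pl ! (j - 1) < j"
  shows "(THE i. (i, j) \<in> nuof pl) = pl ! (j - 1)"
proof -
  let ?i = "pl ! (j - 1)"
  have "pl ! (?i - 1) = Suc (j - 1)" using plvalid_D(3)[OF V, of "j - 1"] h j by auto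
  then have ij: "(?i, j) \<in> nuof pl" using h j by (auto simp: nuof_iff)
  show ?thesis
    using nesting_def plvalid_nesting[OF V] ij by (intro the_equality) (auto simp: nesting_def)
qed

definition partner :: "(nat \<times> nat) set \<Rightarrow> nat \<Rightarrow> nat" where
  "partner \<nu> j = (if \<exists>k. (j, k) \<in> \<nu> then ret \<nu> j else if \<exists>i. (i, j) \<in> \<nu> then (THE i. (i, j) \<in> \<nu>) else 0)"

lemma partner_call: "nesting n \<nu> \<Longrightarrow> (j, k) \<in> \<nu> \<Longrightarrow> partner \<nu> j = k"
  unfolding partner_def using ret_eq by auto

lemma partner_ret: "nesting n \<nu> \<Longrightarrow> (i, j) \<in> \<nu> \<Longrightarrow> partner \<nu> j = i"
proof -
  assume N: "nesting n \<nu>" and ij: "(i, j) \<in> \<nu>"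
  have "\<not> (\<exists>k. (j, k) \<in> \<nu>)" using call_not_ret[OF N _ ij] by blast
  moreover have "(THE i. (i, j) \<in> \<nu>) = i" using nest_inj[OF N] ij by (intro the_equality) auto
  ultimately show ?thesis using ij unfolding partner_def by auto
qed

lemma partner_none: "\<not> (\<exists>k. (j, k) \<in> \<nu>) \<Longrightarrow> \<not> (\<exists>i. (i, j) \<in> \<nu>) \<Longrightarrow> partner \<nu> j = 0"
  unfolding partner_def by auto

lemma nesting_pl:
  assumes N: "nesting n \<nu>"
  shows "\<exists>pl. length pl = n \<and> plvalid pl \<and> nuof pl = \<nu> \<and> (\<forall>x\<in>set pl. x \<le> n)"
proof -
  define pl where "pl = map (\<lambda>k. partner \<nu> (Suc k)) [0..<n]"
  have pln: "pl ! k = partner \<nu> (Suc k)" if "k < n" for k using that by (simp add: pl_def)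
  have cases: "(Suc k, pl ! k) \<in> \<nu> \<and> Suc k < pl ! k \<or> (pl ! k, Suc k) \<in> \<nu> \<and> 0 < pl ! k \<and> pl ! k < Suc k
      \<or> (pl ! k = 0 \<and> \<not> (\<exists>x. (Suc k, x) \<in> \<nu>) \<and> \<not> (\<exists>x. (x, Suc k) \<in> \<nu>))" if k: "k < n" for k
  proof (cases "\<exists>x. (Suc k, x) \<in> \<nu>")
    case True
    then obtain x where x: "(Suc k, x) \<in> \<nu>" by blast
    then show ?thesis using pln[OF k] partner_call[OF N x] nest_lt[OF N x] by auto
  next
    case False
    show ?thesis
    proof (cases "\<exists>x. (x, Suc k) \<in> \<nu>")
      case True
      then obtain x where x: "(x, Suc k) \<in> \<nu>" by blast
      then show ?thesis using pln[OF k] partner_ret[OF N x] nest_lt[OF N x] nest_rng[OF N x] by auto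
    next
      case F2: False
      then show ?thesis using False pln[OF k] partner_none[OF False F2] by auto
    qed
  qed
  have rng: "pl ! k \<le> n" if "k < n" for k
    using cases[OF that] nest_rng[OF N] that by auto
  have nu: "nuof pl = \<nu>"
  proof (intro equalityI subsetI)
    fix x assume "x \<in> nuof pl"
    then obtain j where j: "x = (j, pl ! (j - 1))" "1 \<le> j" "j \<le> length pl" "j < pl ! (j - 1)"
      unfolding nuof_def by blast
    have "length pl = n" by (simp add: pl_def)
    then show "x \<in> \<nu>" using cases[of "j - 1"] j by auto
  next
    fix x assume x: "x \<in> \<nu>"
    then obtain i j where ij: "x = (i, j)" "(i, j) \<in> \<nu>" by (cases x) auto
    have r: "1 \<le> i" "j \<le> n" "i < j" using nest_rng[OF N ij(2)] nest_lt[OF N ij(2)] by auto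
    have "pl ! (i - 1) = j" using pln[of "i - 1"] r partner_call[OF N ij(2)] by auto
    then show "x \<in> nuof pl" using ij r by (auto simp: nuof_iff pl_def)
  qed
  have V: "plvalid pl"
    unfolding plvalid_def
  proof (intro allI impI conjI)
    fix k assume k: "k < length pl"
    then have k': "k < n" by (simp add: pl_def)
    show "pl ! k \<le> length pl" using rng[OF k'] by (simp add: pl_def)
    show "pl ! k \<noteq> Suc k" using cases[OF k'] by auto
    show "pl ! (pl ! k - 1) = Suc k" if nz: "pl ! k \<noteq> 0"
    proof -
      consider "(Suc k, pl ! k) \<in> \<nu>" | "(pl ! k, Suc k) \<in> \<nu>" using cases[OF k'] nz by auto
      then show ?thesis
      proof cases
        case 1
        have "pl ! k - 1 < n" "Suc (pl ! k - 1) = pl ! k" using nest_rng[OF N 1] nest_lt[OF N 1] by auto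
        then show ?thesis using pln partner_ret[OF N 1] by metis
      next
        case 2
        have "pl ! k - 1 < n" "Suc (pl ! k - 1) = pl ! k" using nest_rng[OF N 2] nest_lt[OF N 2] by auto
        then show ?thesis using pln partner_call[OF N 2] by metis
      qed
    qed
    fix l assume l: "l < length pl" "k < l" "Suc k < pl ! k" "Suc l < pl ! l"
    then have l': "l < n" by (simp add: pl_def)
    have c1: "(Suc k, pl ! k) \<in> \<nu>" using cases[OF k'] l by auto
    have c2: "(Suc l, pl ! l) \<in> \<nu>" using cases[OF l'] l by auto
    show "pl ! l < pl ! k \<or> pl ! k < Suc l" using nest_cross[OF N c1 c2] l by auto
  qed
  show ?thesis using V nu rng by (intro exI[of _ pl]) (auto simp: pl_def)
qed


lemma nth_concat_uniform:
  assumes "\<forall>x\<in>set xs. length (f x) = K" "i < length xs" "r < K"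
  shows "concat (map f xs) ! (i * K + r) = f (xs ! i) ! r"
  using assms
proof (induction xs arbitrary: i)
  case Nil then show ?case by simp
next
  case (Cons x xs)
  show ?case
  proof (cases i)
    case 0 then show ?thesis using Cons.prems by (simp add: nth_append)
  next
    case (Suc i')
    have "concat (map f (x # xs)) ! (i * K + r) = concat (map f xs) ! (i' * K + r)"
      using Cons.prems Suc by (simp add: nth_append)
    then show ?thesis using Cons Suc by simp
  qed
qed

lemma idx_lt: "(x::nat) < X \<Longrightarrow> q < Q \<Longrightarrow> x * Q + q < X * Q"
proof -
  assume h: "x < X" "q < Q"
  then have "x * Q + q < x * Q + Q" by simp
  also have "\<dots> = Suc x * Q" by simp
  also have "\<dots> \<le> X * Q" using h by (intro mult_right_mono) auto
  finally show ?thesis .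
qed

lemma idx3_lt: "(p::nat) < N1 \<Longrightarrow> a < M \<Longrightarrow> q < N2 \<Longrightarrow> (p * M + a) * N2 + q < N1 * M * N2"
  by (intro idx_lt) auto

lemma length_concat_uniform:
  "\<forall>x\<in>set xs. length (f x) = K \<Longrightarrow> length (concat (map f xs)) = length xs * K"
  by (induction xs) auto

lemma cm3:
  assumes "p < n" "a < m" "q < n'"
  shows "concat (map (\<lambda>p. concat (map (\<lambda>a. map (\<lambda>q. f p a q) [0..<n']) [0..<m])) [0..<n]) ! ((p * m + a) * n' + q) = f p a q"
proof -
  have inner: "concat (map (\<lambda>a. map (\<lambda>q. f p a q) [0..<n']) [0..<m]) ! (a * n' + q) = f p a q"
    using nth_concat_uniform[of "[0..<m]" "\<lambda>a. map (\<lambda>q. f p a q) [0..<n']" n' a q] assms by simp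
  have len: "\<forall>p\<in>set [0..<n]. length (concat (map (\<lambda>a. map (\<lambda>q. f p a q) [0..<n']) [0..<m])) = m * n'"
    by (simp add: length_concat comp_def sum_list_triv)
  have eq: "(p * m + a) * n' + q = p * (m * n') + (a * n' + q)" by (simp add: algebra_simps)
  have "a * n' + q < m * n'"
  proof -
    have "a * n' + q < a * n' + n'" using assms by simp
    also have "\<dots> = Suc a * n'" by simp
    also have "\<dots> \<le> m * n'" using assms by (intro mult_right_mono) auto
    finally show ?thesis .
  qed
  then show ?thesis unfolding eq using nth_concat_uniform[OF len, of p "a * n' + q"] inner assms by simp
qed

lemma len_cm3: "length (concat (map (\<lambda>p. concat (map (\<lambda>a. map (\<lambda>q. f p a q) [0..<n']) [0..<m])) [0..<n])) = n * m * n'"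
  by (simp add: length_concat comp_def sum_list_triv)

definition lay :: "nat \<Rightarrow> ('k \<Rightarrow> nat) \<Rightarrow> 'k wnwa \<Rightarrow> nat list" where
  "lay m enc A = (let n = nst A in
      [n]
    @ [enc (iota A p). p \<leftarrow> [0..<n]]
    @ [enc (dcall A p a q). p \<leftarrow> [0..<n], a \<leftarrow> [0..<m], q \<leftarrow> [0..<n]]
    @ [enc (dint A p a q). p \<leftarrow> [0..<n], a \<leftarrow> [0..<m], q \<leftarrow> [0..<n]]
    @ [enc (dret A p p' a q). p \<leftarrow> [0..<n], p' \<leftarrow> [0..<n], a \<leftarrow> [0..<m], q \<leftarrow> [0..<n]]
    @ [enc (kappa A p). p \<leftarrow> [0..<n]])"

lemma code_lay: "code_wnwa m enc A = list_encode (lay m enc A)"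
  by (simp add: code_wnwa_def lay_def Let_def)

context
  fixes m :: nat and enc :: "'k \<Rightarrow> nat" and A :: "'k wnwa"
begin


lemma lay_unfold: "lay m enc A = [nst A] @ map (\<lambda>p. enc (iota A p)) [0..<nst A]
  @ concat (map (\<lambda>p. concat (map (\<lambda>a. map (\<lambda>q. enc (dcall A p a q)) [0..<nst A]) [0..<m])) [0..<nst A])
  @ concat (map (\<lambda>p. concat (map (\<lambda>a. map (\<lambda>q. enc (dint A p a q)) [0..<nst A]) [0..<m])) [0..<nst A])
  @ concat (map (\<lambda>p. concat (map (\<lambda>p'. concat (map (\<lambda>a. map (\<lambda>q. enc (dret A p p' a q)) [0..<nst A]) [0..<m])) [0..<nst A])) [0..<nst A])
  @ map (\<lambda>p. enc (kappa A p)) [0..<nst A]"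
  by (simp add: lay_def Let_def concat_map_singleton)

lemma lay_len: "length (lay m enc A) = 1 + nst A + nst A * m * nst A + nst A * m * nst A + nst A * (nst A * m * nst A) + nst A"
  unfolding lay_unfold by (simp add: length_concat comp_def sum_list_triv)

lemma lay_0: "lay m enc A ! 0 = nst A"
  unfolding lay_unfold by simp

lemma lay_iota: "p < nst A \<Longrightarrow> lay m enc A ! (1 + p) = enc (iota A p)"
  unfolding lay_unfold by (simp add: nth_append)

lemma lay_call: "p < nst A \<Longrightarrow> a < m \<Longrightarrow> q < nst A \<Longrightarrow>
    lay m enc A ! (1 + nst A + ((p * m + a) * nst A + q)) = enc (dcall A p a q)"
proof -
  assume h: "p < nst A" "a < m" "q < nst A"
  have lt: "(p * m + a) * nst A + q < nst A * m * nst A"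
    using idx3_lt h by blast
  show ?thesis unfolding lay_unfold using h lt cm3[OF h, of "\<lambda>p a q. enc (dcall A p a q)"]
    by (simp add: nth_append len_cm3)
qed

lemma lay_int: "p < nst A \<Longrightarrow> a < m \<Longrightarrow> q < nst A \<Longrightarrow>
    lay m enc A ! (1 + nst A + nst A * m * nst A + ((p * m + a) * nst A + q)) = enc (dint A p a q)"
proof -
  assume h: "p < nst A" "a < m" "q < nst A"
  have lt: "(p * m + a) * nst A + q < nst A * m * nst A"
    using idx3_lt h by blast
  show ?thesis unfolding lay_unfold using h lt cm3[OF h, of "\<lambda>p a q. enc (dint A p a q)"]
    by (simp add: nth_append len_cm3)
qed

lemma lay_ret: "p < nst A \<Longrightarrow> p' < nst A \<Longrightarrow> a < m \<Longrightarrow> q < nst A \<Longrightarrow>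
    lay m enc A ! (1 + nst A + 2 * (nst A * m * nst A) + (((p * nst A + p') * m + a) * nst A + q))
      = enc (dret A p p' a q)"
proof -
  assume h: "p < nst A" "p' < nst A" "a < m" "q < nst A"
  let ?R = "concat (map (\<lambda>p. concat (map (\<lambda>p'. concat (map (\<lambda>a. map (\<lambda>q. enc (dret A p p' a q)) [0..<nst A]) [0..<m])) [0..<nst A])) [0..<nst A])"
  have len: "\<forall>p\<in>set [0..<nst A]. length (concat (map (\<lambda>p'. concat (map (\<lambda>a. map (\<lambda>q. enc (dret A p p' a q)) [0..<nst A]) [0..<m])) [0..<nst A])) = nst A * m * nst A"
    by (simp add: length_concat comp_def sum_list_triv)
  have inner: "concat (map (\<lambda>p'. concat (map (\<lambda>a. map (\<lambda>q. enc (dret A p p' a q)) [0..<nst A]) [0..<m])) [0..<nst A]) ! ((p' * m + a) * nst A + q) = enc (dret A p p' a q)"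
    using cm3[OF h(2,3,4), of "\<lambda>p' a q. enc (dret A p p' a q)"] by simp
  have lt1: "(p' * m + a) * nst A + q < nst A * m * nst A" using idx3_lt h by blast
  have eq: "((p * nst A + p') * m + a) * nst A + q = p * (nst A * m * nst A) + ((p' * m + a) * nst A + q)"
    by (simp add: algebra_simps)
  have R: "?R ! (((p * nst A + p') * m + a) * nst A + q) = enc (dret A p p' a q)"
    unfolding eq using nth_concat_uniform[OF len, of p "(p' * m + a) * nst A + q"] inner h lt1 by simp
  have lt: "((p * nst A + p') * m + a) * nst A + q < nst A * (nst A * m * nst A)"
    unfolding eq using idx_lt[OF h(1) lt1] by (simp add: mult.commute)
  have lR: "length ?R = nst A * (nst A * m * nst A)"
    by (simp add: length_concat comp_def sum_list_triv)
  show ?thesis unfolding lay_unfold using R lt lR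
    by (simp add: nth_append len_cm3)
qed

lemma lay_kappa: "p < nst A \<Longrightarrow>
    lay m enc A ! (1 + nst A + 2 * (nst A * m * nst A) + nst A * (nst A * m * nst A) + p) = enc (kappa A p)"
  unfolding lay_unfold by (simp add: nth_append len_cm3 length_concat comp_def sum_list_triv)

lemma lay_enc: "0 < i \<Longrightarrow> i < length (lay m enc A) \<Longrightarrow> lay m enc A ! i \<in> range enc"
proof -
  assume h: "0 < i" "i < length (lay m enc A)"
  have "set (tl (lay m enc A)) \<subseteq> range enc" unfolding lay_unfold by auto
  moreover have "lay m enc A ! i = tl (lay m enc A) ! (i - 1)" using h by (simp add: nth_tl)
  moreover have "i - 1 < length (tl (lay m enc A))" using h by simp
  ultimately show ?thesis by (metis nth_mem subsetD)
qed

end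


definition wc :: "nat \<Rightarrow> nat" where "wc t = nthc t 0"
definition pc :: "nat \<Rightarrow> nat" where "pc t = nthc t 1"
definition qc :: "nat \<Rightarrow> nat" where "qc t = nthc t 2"
definition ln :: "nat \<Rightarrow> nat" where "ln t = lenc (wc t)"
definition st :: "nat \<Rightarrow> nat \<Rightarrow> nat" where "st t j = nthc (qc t) j"
definition lett :: "nat \<Rightarrow> nat \<Rightarrow> nat" where "lett t j = nthc (wc t) (j - 1)"
definition pt :: "nat \<Rightarrow> nat \<Rightarrow> nat" where "pt t j = nthc (pc t) (j - 1)"
definition nn :: "nat \<Rightarrow> nat" where "nn c = nthc c 0"
definition lk :: "nat \<Rightarrow> nat \<Rightarrow> nat \<Rightarrow> nat" where
  "lk c0 c i = (if 0 < i \<and> i < lenc c then nthc c i else c0)"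

definition tidx :: "nat \<Rightarrow> nat \<Rightarrow> nat \<Rightarrow> nat \<Rightarrow> nat" where
  "tidx m c t j = (if j < pt t j then 1 + nn c + ((st t (j - 1) * m + lett t j) * nn c + st t j)
     else if 0 < pt t j then 1 + nn c + 2 * (nn c * m * nn c)
        + (((st t (j - 1) * nn c + st t (pt t j - 1)) * m + lett t j) * nn c + st t j)
     else 1 + nn c + nn c * m * nn c + ((st t (j - 1) * m + lett t j) * nn c + st t j))"

definition kidx :: "nat \<Rightarrow> nat \<Rightarrow> nat \<Rightarrow> nat" where
  "kidx m c t = 1 + nn c + 2 * (nn c * m * nn c) + nn c * (nn c * m * nn c) + st t (ln t)"

definition kmul :: "('k::comm_semiring_1 \<Rightarrow> nat) \<Rightarrow> nat \<Rightarrow> nat \<Rightarrow> nat" where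
  "kmul enc x y = enc (inv enc x * inv enc y)"

primrec accw :: "('k::comm_semiring_1 \<Rightarrow> nat) \<Rightarrow> nat \<Rightarrow> nat \<Rightarrow> nat \<Rightarrow> nat \<Rightarrow> nat \<Rightarrow> nat" where
  "accw enc m c0 c t 0 = lk c0 c (1 + st t 0)"
| "accw enc m c0 c t (Suc k) = kmul enc (accw enc m c0 c t k) (lk c0 c (tidx m c t (Suc k)))"

definition wt :: "('k::comm_semiring_1 \<Rightarrow> nat) \<Rightarrow> nat \<Rightarrow> nat \<Rightarrow> nat \<Rightarrow> nat \<Rightarrow> nat" where
  "wt enc m c0 c t = kmul enc (accw enc m c0 c t (ln t)) (lk c0 c (kidx m c t))"

definition allw :: "nat \<Rightarrow> nat \<Rightarrow> bool" where
  "allw m t = (\<forall>j < ln t. nthc (wc t) j < m)"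
definition allq :: "nat \<Rightarrow> nat \<Rightarrow> bool" where
  "allq c t = (\<forall>j < Suc (ln t). st t j < nn c)"
definition plv :: "nat \<Rightarrow> nat \<Rightarrow> bool" where
  "plv pcc L = (\<forall>k<L. nthc pcc k \<le> L \<and> nthc pcc k \<noteq> Suc k \<and>
     (nthc pcc k \<noteq> 0 \<longrightarrow> nthc pcc (nthc pcc k - 1) = Suc k) \<and>
     (\<forall>l<L. k < l \<longrightarrow> Suc k < nthc pcc k \<longrightarrow> Suc l < nthc pcc l \<longrightarrow> nthc pcc l < nthc pcc k \<or> nthc pcc k < Suc l))"

definition valid :: "nat \<Rightarrow> nat \<Rightarrow> nat \<Rightarrow> bool" where
  "valid m c t \<longleftrightarrow> 0 < ln t \<and> lenc (pc t) = ln t \<and> lenc (qc t) = Suc (ln t) \<and> allw m t \<and> allq c t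
     \<and> plv (pc t) (ln t)"

definition good :: "('k::comm_semiring_1 \<Rightarrow> nat) \<Rightarrow> nat \<Rightarrow> nat \<Rightarrow> nat \<Rightarrow> nat \<Rightarrow> bool" where
  "good enc m c0 c t \<longleftrightarrow> valid m c t \<and> wt enc m c0 c t \<noteq> c0"

definition Bd :: "nat \<Rightarrow> nat" where "Bd n = n * (n * n + 1) * (n * n) ^ (n * n)"

primrec Ecode :: "nat \<Rightarrow> nat \<Rightarrow> nat" where
  "Ecode 0 X = 0"
| "Ecode (Suc k) X = Suc (prod_encode (X, Ecode k X))"

definition Tb :: "nat \<Rightarrow> nat \<Rightarrow> nat" where
  "Tb m c = Suc (Ecode 3 (m + nn c + Bd (nn c) + Ecode (Suc (Bd (nn c))) (m + nn c + Bd (nn c))))"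

definition answer :: "('k::comm_semiring_1 \<Rightarrow> nat) \<Rightarrow> nat \<Rightarrow> nat \<Rightarrow> nat \<Rightarrow> nat" where
  "answer enc m c0 c = (if \<exists>t < Tb m c. good enc m c0 c t then 0 else 1)"

lemma prod_encode_mono: "a \<le> a' \<Longrightarrow> b \<le> b' \<Longrightarrow> prod_encode (a, b) \<le> prod_encode (a', b')"
  unfolding prod_encode_def using triangle_mono[of "a + b" "a' + b'"] by simp

lemma Ecode_mono: "k \<le> k' \<Longrightarrow> Ecode k X \<le> Ecode k' X"
proof (induction k' arbitrary: k)
  case 0 then show ?case by simp
next
  case (Suc k')
  have st: "Ecode k' X \<le> Ecode (Suc k') X" using le_prod_encode_2[of "Ecode k' X" X] by simp
  show ?case
  proof (cases "k = Suc k'")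
    case True then show ?thesis by simp
  next
    case False
    then have "k \<le> k'" using Suc.prems by simp
    then show ?thesis using Suc.IH st le_trans by blast
  qed
qed

lemma enc_le_Ecode: "length xs \<le> k \<Longrightarrow> (\<forall>x\<in>set xs. x \<le> X) \<Longrightarrow> list_encode xs \<le> Ecode k X"
proof (induction xs arbitrary: k)
  case Nil then show ?case by simp
next
  case (Cons x xs)
  then obtain k' where k: "k = Suc k'" by (cases k) auto
  have "list_encode xs \<le> Ecode k' X" using Cons k by auto
  then have "prod_encode (x, list_encode xs) \<le> prod_encode (X, Ecode k' X)"
    using Cons.prems by (intro prod_encode_mono) auto
  then show ?case using k by simp
qed


lemma set_lt: "set xs \<subseteq> {..<n} \<Longrightarrow> i < length xs \<Longrightarrow> xs ! i < n"
  using nth_mem by blast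

lemma plv_iff: "length pl = L \<Longrightarrow> plv (list_encode pl) L \<longleftrightarrow> plvalid pl"
  unfolding plv_def plvalid_def by (auto simp: nthc_enc)

context
  fixes m :: nat and enc :: "'k::comm_semiring_1 \<Rightarrow> nat" and A :: "'k wnwa" and t :: nat
  assumes inj: "inj enc"
begin

definition "cc = code_wnwa m enc A"
definition "LL = lay m enc A"
definition "ww = list_decode (wc t)"
definition "pp = list_decode (pc t)"
definition "qq = list_decode (qc t)"

lemma cc_nth: "i < length LL \<Longrightarrow> nthc cc i = LL ! i"
  by (simp add: cc_def LL_def code_lay nthc_enc)
lemma cc_len: "lenc cc = length LL"
  by (simp add: cc_def LL_def code_lay lenc_enc)
lemma nn_cc: "nn cc = nst A"
  using cc_nth[of 0] by (simp add: nn_def LL_def lay_0 lay_len)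
lemma lk_cc: "0 < i \<Longrightarrow> i < length LL \<Longrightarrow> lk c0 cc i = LL ! i"
  by (simp add: lk_def cc_len cc_nth)

lemma ln_ww: "ln t = length ww" by (simp add: ln_def ww_def lenc_dec)
lemma wc_enc: "wc t = list_encode ww" by (simp add: ww_def)
lemma pc_enc: "pc t = list_encode pp" by (simp add: pp_def)
lemma qc_enc: "qc t = list_encode qq" by (simp add: qq_def)

lemma valid_iff: "valid m cc t \<longleftrightarrow> ww \<noteq> [] \<and> length pp = length ww \<and> length qq = Suc (length ww)
   \<and> set ww \<subseteq> {..<m} \<and> set qq \<subseteq> {..<nst A} \<and> plvalid pp"
proof -
  have "allw m t \<longleftrightarrow> (\<forall>j<length ww. ww ! j < m)"
    unfolding allw_def ln_ww wc_enc by (simp add: nthc_enc)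
  then have a1: "allw m t \<longleftrightarrow> set ww \<subseteq> {..<m}"
    using all_set_conv_all_nth[of ww "\<lambda>x. x < m"] by auto
  have a2: "allq cc t \<longleftrightarrow> set qq \<subseteq> {..<nst A}" if l: "length qq = Suc (length ww)"
  proof -
    have "allq cc t \<longleftrightarrow> (\<forall>j<length qq. qq ! j < nst A)"
      unfolding allq_def ln_ww st_def qc_enc nn_cc l by (simp add: nthc_enc l)
    then show ?thesis using all_set_conv_all_nth[of qq "\<lambda>x. x < nst A"] by auto
  qed
  have a3: "length pp = length ww \<Longrightarrow> plv (pc t) (ln t) \<longleftrightarrow> plvalid pp"
    unfolding pc_enc ln_ww by (rule plv_iff)
  show ?thesis unfolding valid_def
    using a1 a2 a3 by (auto simp: ln_ww pc_enc qc_enc lenc_enc)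
qed

lemma kmul_enc: "kmul enc (enc a) (enc b) = enc (a * b)"
  by (simp add: kmul_def inv_f_f[OF inj])


lemma st_qq: "k < length qq \<Longrightarrow> st t k = qq ! k"
  by (simp add: st_def qc_enc nthc_enc)
lemma lett_ww: "1 \<le> j \<Longrightarrow> j \<le> length ww \<Longrightarrow> lett t j = ww ! (j - 1)"
  by (simp add: lett_def wc_enc nthc_enc)
lemma pt_pp: "1 \<le> j \<Longrightarrow> j \<le> length pp \<Longrightarrow> pt t j = pp ! (j - 1)"
  by (simp add: pt_def pc_enc nthc_enc)

lemma tidx_ok:
  assumes V: "valid m cc t" and j: "1 \<le> j" "j \<le> length ww"
  shows "0 < tidx m cc t j \<and> tidx m cc t j < length LL \<and> LL ! tidx m cc t j = enc (pos_weight A ww (nuof pp) qq j)"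
proof -
  note vi = V[unfolded valid_iff]
  let ?n = "nst A"
  have lLL: "length LL = 1 + ?n + ?n * m * ?n + ?n * m * ?n + ?n * (?n * m * ?n) + ?n"
    by (simp add: LL_def lay_len)
  have qlt: "qq ! k < ?n" if "k \<le> length ww" for k
  proof -
    have "k < length qq" using vi that by simp
    then show ?thesis using vi nth_mem by blast
  qed
  have wlt: "ww ! (j - 1) < m" using vi j by (intro set_lt[of ww m]) auto
  have PV: "plvalid pp" using vi by simp
  have lpp: "length pp = length ww" using vi by simp
  have st1: "st t (j - 1) = qq ! (j - 1)" "st t j = qq ! j" using st_qq vi j by auto
  have le1: "lett t j = ww ! (j - 1)" using lett_ww j by simp
  have pt1: "pt t j = pp ! (j - 1)" using pt_pp j lpp by simp
  let ?p = "qq ! (j - 1)" and ?q = "qq ! j" and ?a = "ww ! (j - 1)" and ?P = "pp ! (j - 1)"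
  have pq: "?p < ?n" "?q < ?n" using qlt j by auto
  have i3: "(?p * m + ?a) * ?n + ?q < ?n * m * ?n" using idx3_lt pq wlt by blast
  have jl: "1 \<le> j" "j \<le> length pp" using j lpp by auto
  show ?thesis
  proof (cases "j < ?P")
    case True
    have ti: "tidx m cc t j = 1 + ?n + ((?p * m + ?a) * ?n + ?q)"
      unfolding tidx_def nn_cc st1 le1 pt1 using True by simp
    have pw: "pos_weight A ww (nuof pp) qq j = dcall A ?p ?a ?q"
      using nuof_call[OF PV jl] True by (simp add: pos_weight_def)
    show ?thesis using ti pw lay_call[OF pq(1) wlt pq(2)] i3 lLL by (simp add: LL_def)
  next
    case nc: False
    show ?thesis
    proof (cases "0 < ?P")
      case True
      have "?P \<noteq> j" using plvalid_D(2)[OF PV, of "j - 1"] jl by auto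
      then have Pj: "?P < j" using nc by simp
      let ?p' = "qq ! (?P - 1)"
      have p'lt: "?p' < ?n" using qlt Pj j by auto
      have stP: "st t (?P - 1) = ?p'" using st_qq vi Pj j by auto
      have ti: "tidx m cc t j = 1 + ?n + 2 * (?n * m * ?n) + (((?p * ?n + ?p') * m + ?a) * ?n + ?q)"
        unfolding tidx_def nn_cc st1 le1 pt1 stP using True nc by simp
      have pw: "pos_weight A ww (nuof pp) qq j = dret A ?p ?p' ?a ?q"
        using nuof_call[OF PV jl] nuof_ret[OF PV jl] nuof_the[OF PV jl True Pj] True nc Pj
        by (simp add: pos_weight_def)
      have "?p * ?n + ?p' < ?n * ?n" using idx_lt[OF pq(1) p'lt] .
      then have "((?p * ?n + ?p') * m + ?a) * ?n + ?q < (?n * ?n) * m * ?n" using idx3_lt wlt pq by blast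
      then have i4: "((?p * ?n + ?p') * m + ?a) * ?n + ?q < ?n * (?n * m * ?n)" by (simp add: mult.assoc)
      show ?thesis using ti pw lay_ret[OF pq(1) p'lt wlt pq(2)] i4 lLL by (simp add: LL_def)
    next
      case False
      then have P0: "?P = 0" by simp
      have ti: "tidx m cc t j = 1 + ?n + ?n * m * ?n + ((?p * m + ?a) * ?n + ?q)"
        unfolding tidx_def nn_cc st1 le1 pt1 using P0 by simp
      have pw: "pos_weight A ww (nuof pp) qq j = dint A ?p ?a ?q"
        using nuof_call[OF PV jl] nuof_ret[OF PV jl] P0 by (simp add: pos_weight_def)
      show ?thesis using ti pw lay_int[OF pq(1) wlt pq(2)] i3 lLL by (simp add: LL_def)
    qed
  qed
qed

lemma acc_ok:
  assumes V: "valid m cc t" and k: "k \<le> length ww"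
  shows "accw enc m c0 cc t k = enc (iota A (qq ! 0) * (\<Prod>j\<in>{1..k}. pos_weight A ww (nuof pp) qq j))"
  using k
proof (induction k)
  case 0
  note vi = V[unfolded valid_iff]
  have q0: "qq ! 0 < nst A" using vi by (intro set_lt[of qq]) auto
  have "st t 0 = qq ! 0" using st_qq vi by auto
  moreover have "1 + qq ! 0 < length LL" using q0 by (simp add: LL_def lay_len)
  ultimately show ?case using lk_cc lay_iota[OF q0] by (simp add: LL_def)
next
  case (Suc k)
  have T: "0 < tidx m cc t (Suc k) \<and> tidx m cc t (Suc k) < length LL
      \<and> LL ! tidx m cc t (Suc k) = enc (pos_weight A ww (nuof pp) qq (Suc k))"
    using tidx_ok[OF V, of "Suc k"] Suc.prems by auto
  have pr: "(\<Prod>j\<in>{1..Suc k}. pos_weight A ww (nuof pp) qq j)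
      = (\<Prod>j\<in>{1..k}. pos_weight A ww (nuof pp) qq j) * pos_weight A ww (nuof pp) qq (Suc k)"
  proof -
    have "{1..Suc k} = insert (Suc k) {1..k}" by auto
    then show ?thesis by (simp add: mult.commute)
  qed
  show ?case using Suc T lk_cc[of "tidx m cc t (Suc k)" c0] by (simp add: kmul_enc pr mult.assoc)
qed

lemma wt_ok:
  assumes V: "valid m cc t"
  shows "wt enc m c0 cc t = enc (rw A ww (nuof pp) qq)"
proof -
  note vi = V[unfolded valid_iff]
  have ql: "qq ! length ww < nst A" using vi by (intro set_lt[of qq]) auto
  have sk: "st t (ln t) = qq ! length ww" using st_qq vi ln_ww by auto
  have ki: "kidx m cc t = 1 + nst A + 2 * (nst A * m * nst A) + nst A * (nst A * m * nst A) + qq ! length ww"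
    by (simp add: kidx_def nn_cc sk)
  have kl: "kidx m cc t < length LL" using ql ki by (simp add: LL_def lay_len)
  have "lk c0 cc (kidx m cc t) = enc (kappa A (qq ! length ww))"
    using lk_cc[of "kidx m cc t" c0] kl ki lay_kappa[OF ql] by (simp add: LL_def)
  then show ?thesis
    using acc_ok[OF V, of "length ww"] by (simp add: wt_def ln_ww kmul_enc rw_def)
qed

end


lemma zsf_sum:
  assumes z: "zero_sum_free TYPE('k::comm_semiring_1)" and f: "finite SS" and s: "sum (g :: _ \<Rightarrow> 'k) SS = 0"
  shows "\<forall>x\<in>SS. g x = 0"
  using f s
proof (induction SS rule: finite_induct)
  case empty then show ?case by simp
next
  case (insert x F)
  then have "g x + sum g F = 0" by simp
  then have "g x = 0 \<and> sum g F = 0" using z unfolding zero_sum_free_def by blast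
  then show ?case using insert by simp
qed

lemma finite_runs: "finite (runs A n)"
proof -
  have "runs A n \<subseteq> {xs. set xs \<subseteq> {..<nst A} \<and> length xs = Suc n}" by (auto simp: runs_def)
  then show ?thesis using finite_lists_length_eq[of "{..<nst A}" "Suc n"] finite_subset by blast
qed

lemma behaviour_rw: "behaviour A (w, \<nu>) = (\<Sum>qs\<in>runs A (length w). rw A w \<nu> qs)"
  by (simp add: behaviour_def rw_def)

lemma behaviour_nz:
  assumes z: "zero_sum_free TYPE('k::comm_semiring_1)"
  shows "behaviour (A :: 'k wnwa) (w, \<nu>) \<noteq> 0 \<longleftrightarrow> (\<exists>qs\<in>runs A (length w). rw A w \<nu> qs \<noteq> 0)"
proof
  assume h: "behaviour A (w, \<nu>) \<noteq> 0"
  show "\<exists>qs\<in>runs A (length w). rw A w \<nu> qs \<noteq> 0"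
  proof (rule ccontr)
    assume "\<not> (\<exists>qs\<in>runs A (length w). rw A w \<nu> qs \<noteq> 0)"
    then have "(\<Sum>qs\<in>runs A (length w). rw A w \<nu> qs) = 0" by (intro sum.neutral) auto
    then show False using h by (simp add: behaviour_rw)
  qed
next
  assume "\<exists>qs\<in>runs A (length w). rw A w \<nu> qs \<noteq> 0"
  then show "behaviour A (w, \<nu>) \<noteq> 0"
    using zsf_sum[OF z finite_runs, of "rw A w \<nu>" A "length w"] by (auto simp: behaviour_rw)
qed

theorem decide_ok:
  fixes enc :: "'k::comm_semiring_1 \<Rightarrow> nat" and A :: "'k wnwa"
  assumes inj: "inj enc" and z: "zero_sum_free TYPE('k)"
  shows "(\<exists>t < Tb m (code_wnwa m enc A). good enc m (enc 0) (code_wnwa m enc A) t)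
     \<longleftrightarrow> (\<exists>nw\<in>NW m. behaviour A nw \<noteq> 0)"
proof
  assume "\<exists>t < Tb m (code_wnwa m enc A). good enc m (enc 0) (code_wnwa m enc A) t"
  then obtain t where g: "good enc m (enc 0) (code_wnwa m enc A) t" by blast
  have cc: "cc m enc A = code_wnwa m enc A" using cc_def[OF inj] .
  have V: "valid m (cc m enc A) t" using g cc by (simp add: good_def)
  note vi = valid_iff[OF inj, of m A t, THEN iffD1, OF V]
  have "wt enc m (enc 0) (cc m enc A) t = enc (rw A (ww t) (nuof (pp t)) (qq t))"
    using wt_ok[OF inj V] .
  then have nz: "rw A (ww t) (nuof (pp t)) (qq t) \<noteq> 0" using g cc by (auto simp: good_def)
  have nw: "(ww t, nuof (pp t)) \<in> NW m"
    using vi plvalid_nesting[of "pp t"] by (auto simp: NW_def)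
  have "qq t \<in> runs A (length (ww t))" using vi by (simp add: runs_def)
  then have "behaviour A (ww t, nuof (pp t)) \<noteq> 0" using behaviour_nz[OF z] nz by blast
  then show "\<exists>nw\<in>NW m. behaviour A nw \<noteq> 0" using nw by blast
next
  assume "\<exists>nw\<in>NW m. behaviour A nw \<noteq> 0"
  then obtain w \<nu> where nw: "(w, \<nu>) \<in> NW m" "behaviour A (w, \<nu>) \<noteq> 0" by auto
  then obtain qs where "qs \<in> runs A (length w)" "rw A w \<nu> qs \<noteq> 0" using behaviour_nz[OF z] by blast
  then have "Wit A m (length w)" using nw unfolding Wit_def by blast
  then obtain L' where L': "L' \<le> Bd (nst A)" "Wit A m L'" using short_wit unfolding Bd_def by blast
  then obtain w' \<nu>' qs' where W': "(w', \<nu>') \<in> NW m" "qs' \<in> runs A (length w')" "length w' = L'"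
     "rw A w' \<nu>' qs' \<noteq> 0" unfolding Wit_def by blast
  have N': "nesting (length w') \<nu>'" using W' by (simp add: NW_def)
  obtain pl where pl: "length pl = length w'" "plvalid pl" "nuof pl = \<nu>'" "\<forall>x\<in>set pl. x \<le> length w'"
    using nesting_pl[OF N'] by blast
  define t where "t = list_encode [list_encode w', list_encode pl, list_encode qs']"
  have wc: "wc t = list_encode w'" and pc: "pc t = list_encode pl" and qc: "qc t = list_encode qs'"
    unfolding t_def wc_def pc_def qc_def by (subst nthc_enc; simp)+
  have ww: "ww t = w'" using ww_def[OF inj] wc by simp
  have pp: "pp t = pl" using pp_def[OF inj] pc by simp
  have qq: "qq t = qs'" using qq_def[OF inj] qc by simp
  have cc: "cc m enc A = code_wnwa m enc A" using cc_def[OF inj] .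
  have V: "valid m (cc m enc A) t"
    unfolding valid_iff[OF inj] ww pp qq using W' pl by (auto simp: NW_def runs_def)
  have wt: "wt enc m (enc 0) (cc m enc A) t = enc (rw A w' \<nu>' qs')"
    using wt_ok[OF inj V] ww pp qq pl by simp
  then have G: "good enc m (enc 0) (code_wnwa m enc A) t"
    using V W' inj cc by (auto simp: good_def inj_eq)
  have nnc: "nn (code_wnwa m enc A) = nst A" using nn_cc[OF inj, of m A] cc by simp
  let ?X = "m + nst A + Bd (nst A)"
  let ?Y = "Ecode (Suc (Bd (nst A))) ?X"
  have b1: "list_encode w' \<le> ?Y"
    using W' L' by (intro enc_le_Ecode) (auto simp: NW_def)
  have b2: "list_encode pl \<le> ?Y"
    using pl W' L' by (intro enc_le_Ecode) auto
  have qsl: "length qs' = Suc L'" "set qs' \<subseteq> {..<nst A}" using W' by (auto simp: runs_def)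
  have b3: "list_encode qs' \<le> ?Y"
    using qsl L' by (intro enc_le_Ecode) auto
  have "t \<le> Ecode 3 (?X + ?Y)"
    unfolding t_def using b1 b2 b3 by (intro enc_le_Ecode) auto
  then have "t < Tb m (code_wnwa m enc A)" by (simp add: Tb_def nnc)
  then show "\<exists>t < Tb m (code_wnwa m enc A). good enc m (enc 0) (code_wnwa m enc A) t" using G by blast
qed


lemmas rci = rc_add rc_mult rc_sub rc_succ rc_lt rc_le rc_eq rc_not rc_conj rc_disj rc_imp rc_if
  rc_nthc rc_lenc rc_triangle rc_proj rc_const

lemma rc_wc: "rcomp k D f \<Longrightarrow> rcomp k D (\<lambda>xs. wc (f xs))" unfolding wc_def by (intro rci)
lemma rc_pc: "rcomp k D f \<Longrightarrow> rcomp k D (\<lambda>xs. pc (f xs))" unfolding pc_def by (intro rci)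
lemma rc_qc: "rcomp k D f \<Longrightarrow> rcomp k D (\<lambda>xs. qc (f xs))" unfolding qc_def by (intro rci)
lemma rc_ln: "rcomp k D f \<Longrightarrow> rcomp k D (\<lambda>xs. ln (f xs))" unfolding ln_def by (intro rci rc_wc)
lemma rc_nn: "rcomp k D f \<Longrightarrow> rcomp k D (\<lambda>xs. nn (f xs))" unfolding nn_def by (intro rci)
lemma rc_st: "rcomp k D f \<Longrightarrow> rcomp k D g \<Longrightarrow> rcomp k D (\<lambda>xs. st (f xs) (g xs))"
  unfolding st_def by (intro rci rc_qc)
lemma rc_lett: "rcomp k D f \<Longrightarrow> rcomp k D g \<Longrightarrow> rcomp k D (\<lambda>xs. lett (f xs) (g xs))"
  unfolding lett_def by (intro rci rc_wc)
lemma rc_pt: "rcomp k D f \<Longrightarrow> rcomp k D g \<Longrightarrow> rcomp k D (\<lambda>xs. pt (f xs) (g xs))"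
  unfolding pt_def by (intro rci rc_pc)
lemma rc_lk: "rcomp k D f \<Longrightarrow> rcomp k D g \<Longrightarrow> rcomp k D (\<lambda>xs. lk c0 (f xs) (g xs))"
  unfolding lk_def by (intro rci)
lemma rc_tidx: "rcomp k D f \<Longrightarrow> rcomp k D g \<Longrightarrow> rcomp k D h \<Longrightarrow> rcomp k D (\<lambda>xs. tidx m (f xs) (g xs) (h xs))"
  unfolding tidx_def by (intro rci rc_nn rc_st rc_lett rc_pt)
lemma rc_kidx: "rcomp k D f \<Longrightarrow> rcomp k D g \<Longrightarrow> rcomp k D (\<lambda>xs. kidx m (f xs) (g xs))"
  unfolding kidx_def by (intro rci rc_nn rc_st rc_ln)

lemma rc_allw: "rcomp k D f \<Longrightarrow> rcomp k D (\<lambda>xs. of_bool (allw m (f xs)))"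
proof (rule rc_lift1[where F="\<lambda>x. of_bool (allw m x)"])
  have "rcomp 1 (\<lambda>_. True) (\<lambda>xs. of_bool (\<forall>j<ln (xs ! 0). nthc (wc (xs ! 0)) j < m))"
    by (rule rc_all[where G="\<lambda>ys. of_bool (nthc (wc (ys ! 1)) (ys ! 0) < m)"])
       (auto intro!: rci rc_wc rc_ln)
  then show "rcomp 1 (\<lambda>_. True) (\<lambda>ys. of_bool (allw m (ys ! 0)))" by (simp add: allw_def)
qed

lemma rc_allq: "rcomp k D f \<Longrightarrow> rcomp k D g \<Longrightarrow> rcomp k D (\<lambda>xs. of_bool (allq (f xs) (g xs)))"
proof (rule rc_lift2[where F="\<lambda>x y. of_bool (allq x y)"])
  have "rcomp 2 (\<lambda>_. True) (\<lambda>xs. of_bool (\<forall>j<Suc (ln (xs ! 1)). st (xs ! 1) j < nn (xs ! 0)))"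
    by (rule rc_all[where G="\<lambda>ys. of_bool (st (ys ! 2) (ys ! 0) < nn (ys ! 1))"])
       (auto intro!: rci rc_st rc_nn rc_ln)
  then show "rcomp 2 (\<lambda>_. True) (\<lambda>ys. of_bool (allq (ys ! 0) (ys ! 1)))" by (simp add: allq_def)
qed

lemma rc_plv: "rcomp k D f \<Longrightarrow> rcomp k D g \<Longrightarrow> rcomp k D (\<lambda>xs. of_bool (plv (f xs) (g xs)))"
proof (rule rc_lift2[where F="\<lambda>x y. of_bool (plv x y)"])
  let ?N = "\<lambda>pcc k. nthc pcc k"
  have inner: "rcomp (Suc 2) (\<lambda>_. True) (\<lambda>ys. of_bool (\<forall>l<ys ! 2. ys ! 0 < l \<longrightarrow> Suc (ys ! 0) < nthc (ys ! 1) (ys ! 0) \<longrightarrow>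
        Suc l < nthc (ys ! 1) l \<longrightarrow> nthc (ys ! 1) l < nthc (ys ! 1) (ys ! 0) \<or> nthc (ys ! 1) (ys ! 0) < Suc l))"
    by (rule rc_all[where G="\<lambda>zs. of_bool (zs ! 1 < zs ! 0 \<longrightarrow> Suc (zs ! 1) < nthc (zs ! 2) (zs ! 1) \<longrightarrow>
        Suc (zs ! 0) < nthc (zs ! 2) (zs ! 0) \<longrightarrow> nthc (zs ! 2) (zs ! 0) < nthc (zs ! 2) (zs ! 1) \<or> nthc (zs ! 2) (zs ! 1) < Suc (zs ! 0))"])
       (auto intro!: rci)
  have "rcomp 2 (\<lambda>_. True) (\<lambda>xs. of_bool (\<forall>k<xs ! 1. nthc (xs ! 0) k \<le> xs ! 1 \<and> nthc (xs ! 0) k \<noteq> Suc k \<and>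
     (nthc (xs ! 0) k \<noteq> 0 \<longrightarrow> nthc (xs ! 0) (nthc (xs ! 0) k - 1) = Suc k) \<and>
     (\<forall>l<xs ! 1. k < l \<longrightarrow> Suc k < nthc (xs ! 0) k \<longrightarrow> Suc l < nthc (xs ! 0) l \<longrightarrow> nthc (xs ! 0) l < nthc (xs ! 0) k \<or> nthc (xs ! 0) k < Suc l)))"
  proof (rule rc_all[where G="\<lambda>ys. of_bool (nthc (ys ! 1) (ys ! 0) \<le> ys ! 2 \<and> nthc (ys ! 1) (ys ! 0) \<noteq> Suc (ys ! 0) \<and>
     (nthc (ys ! 1) (ys ! 0) \<noteq> 0 \<longrightarrow> nthc (ys ! 1) (nthc (ys ! 1) (ys ! 0) - 1) = Suc (ys ! 0)) \<and>
     (\<forall>l<ys ! 2. ys ! 0 < l \<longrightarrow> Suc (ys ! 0) < nthc (ys ! 1) (ys ! 0) \<longrightarrow>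
        Suc l < nthc (ys ! 1) l \<longrightarrow> nthc (ys ! 1) l < nthc (ys ! 1) (ys ! 0) \<or> nthc (ys ! 1) (ys ! 0) < Suc l))"])
    show "rcomp (Suc 2) (\<lambda>ys. True) (\<lambda>ys. of_bool (nthc (ys ! 1) (ys ! 0) \<le> ys ! 2 \<and> nthc (ys ! 1) (ys ! 0) \<noteq> Suc (ys ! 0) \<and>
     (nthc (ys ! 1) (ys ! 0) \<noteq> 0 \<longrightarrow> nthc (ys ! 1) (nthc (ys ! 1) (ys ! 0) - 1) = Suc (ys ! 0)) \<and>
     (\<forall>l<ys ! 2. ys ! 0 < l \<longrightarrow> Suc (ys ! 0) < nthc (ys ! 1) (ys ! 0) \<longrightarrow>
        Suc l < nthc (ys ! 1) l \<longrightarrow> nthc (ys ! 1) l < nthc (ys ! 1) (ys ! 0) \<or> nthc (ys ! 1) (ys ! 0) < Suc l)))"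
      by (intro rc_conj rc_le rc_not rc_eq rc_imp rc_nthc rc_proj rc_succ rc_sub rc_const inner) auto
  qed (auto intro!: rci)
  then show "rcomp 2 (\<lambda>_. True) (\<lambda>ys. of_bool (plv (ys ! 0) (ys ! 1)))" by (simp add: plv_def)
qed

lemma rc_valid: "rcomp k D f \<Longrightarrow> rcomp k D g \<Longrightarrow> rcomp k D (\<lambda>xs. of_bool (valid m (f xs) (g xs)))"
  unfolding valid_def by (intro rci rc_ln rc_pc rc_qc rc_allw rc_allq rc_plv)

lemma prec_pow: "prec (\<lambda>_. Suc 0) (\<lambda>zs. zs ! 0 * zs ! 2) n xs = (xs ! 0) ^ n"
  by (induction n) auto

lemma rc_pow: "rcomp k D f \<Longrightarrow> rcomp k D g \<Longrightarrow> rcomp k D (\<lambda>xs. f xs ^ g xs)"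
proof (rule rc_lift2[where F="\<lambda>x y. x ^ y"])
  have "rcomp 2 (\<lambda>_. True) (\<lambda>xs. prec (\<lambda>_. 1) (\<lambda>zs. zs ! 0 * zs ! 2) (xs ! 1) xs)"
    by (rule rc_prec[where E="\<lambda>_. True"]) (auto intro!: rci)
  then show "rcomp 2 (\<lambda>_. True) (\<lambda>ys. ys ! 0 ^ ys ! 1)"
    by (rule rc_cong) (simp add: prec_pow)
qed

lemma prec_Ecode: "prec (\<lambda>_. 0) (\<lambda>zs. Suc (triangle (zs ! 3 + zs ! 0) + zs ! 3)) n xs = Ecode n (xs ! 1)"
  by (induction n) (auto simp: prod_encode_def numeral_3_eq_3)

lemma rc_Ecode: "rcomp k D f \<Longrightarrow> rcomp k D g \<Longrightarrow> rcomp k D (\<lambda>xs. Ecode (f xs) (g xs))"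
proof (rule rc_lift2[where F="Ecode"])
  have "rcomp 2 (\<lambda>_. True) (\<lambda>xs. prec (\<lambda>_. 0) (\<lambda>zs. Suc (triangle (zs ! 3 + zs ! 0) + zs ! 3)) (xs ! 0) xs)"
    by (rule rc_prec[where E="\<lambda>_. True"]) (auto intro!: rci)
  then show "rcomp 2 (\<lambda>_. True) (\<lambda>ys. Ecode (ys ! 0) (ys ! 1))"
    by (rule rc_cong) (simp add: prec_Ecode)
qed

lemma rc_Tb: "rcomp k D f \<Longrightarrow> rcomp k D (\<lambda>xs. Tb m (f xs))"
  unfolding Tb_def Bd_def by (intro rci rc_Ecode rc_nn rc_pow)

definition goodc :: "('k::comm_semiring_1 \<Rightarrow> nat) \<Rightarrow> nat \<Rightarrow> nat \<Rightarrow> bool" where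
  "goodc enc c0 c \<longleftrightarrow> c0 \<in> range enc \<and> (\<forall>i. 0 < i \<longrightarrow> i < lenc c \<longrightarrow> nthc c i \<in> range enc)"

lemma lk_range: "goodc enc c0 c \<Longrightarrow> lk c0 c i \<in> range enc"
  by (auto simp: goodc_def lk_def)

lemma kmul_range: "kmul enc x y \<in> range enc"
  by (simp add: kmul_def)

lemma accw_range: "goodc enc c0 c \<Longrightarrow> accw enc m c0 c t k \<in> range enc"
  by (cases k) (auto simp: lk_range kmul_range)

lemma rc_kmul_base:
  assumes cs: "computable_semiring (enc :: 'k::comm_semiring_1 \<Rightarrow> nat)"
  shows "rcomp 2 (\<lambda>ys. ys ! 0 \<in> range enc \<and> ys ! 1 \<in> range enc) (\<lambda>ys. kmul enc (ys ! 0) (ys ! 1))"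
proof -
  from cs obtain p where p: "\<forall>a b. eval p [enc a, enc b] (enc (a * b))" and inj: "inj enc"
    unfolding computable_semiring_def by blast
  show ?thesis unfolding rcomp_def
  proof (intro exI[of _ p] allI impI)
    fix ys :: "nat list" assume l: "length ys = 2" and r: "ys ! 0 \<in> range enc \<and> ys ! 1 \<in> range enc"
    then obtain a b where ab: "ys ! 0 = enc a" "ys ! 1 = enc b" by blast
    have ys: "ys = [enc a, enc b]" using l ab by (cases ys; cases "tl ys") (auto simp: numeral_2_eq_2)
    show "eval p ys (kmul enc (ys ! 0) (ys ! 1))"
      using p ys by (simp add: kmul_def inv_f_f[OF inj])
  qed
qed

lemma rc_kmul:
  assumes cs: "computable_semiring (enc :: 'k::comm_semiring_1 \<Rightarrow> nat)"
    and f: "rcomp k D f" and g: "rcomp k D g"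
    and r: "\<And>xs. length xs = k \<Longrightarrow> D xs \<Longrightarrow> f xs \<in> range enc \<and> g xs \<in> range enc"
  shows "rcomp k D (\<lambda>xs. kmul enc (f xs) (g xs))"
proof -
  have "rcomp k D (\<lambda>xs. (\<lambda>ys. kmul enc (ys ! 0) (ys ! 1)) (map (\<lambda>h. h xs) [f, g]))"
    by (rule rc_cn[OF rc_kmul_base[OF cs]]) (auto simp: f g r)
  then show ?thesis by simp
qed

lemma prec_accw: "length xs = 2 \<Longrightarrow>
  prec (\<lambda>xs. lk c0 (xs ! 1) (1 + st (xs ! 0) 0))
       (\<lambda>zs. kmul enc (zs ! 0) (lk c0 (zs ! 3) (tidx m (zs ! 3) (zs ! 2) (Suc (zs ! 1))))) n xs
   = accw enc m c0 (xs ! 1) (xs ! 0) n"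
  by (induction n) (auto simp: numeral_3_eq_3 numeral_2_eq_2)

lemma rc_wt:
  assumes cs: "computable_semiring (enc :: 'k::comm_semiring_1 \<Rightarrow> nat)"
  shows "rcomp 2 (\<lambda>ys. goodc enc c0 (ys ! 1)) (\<lambda>ys. wt enc m c0 (ys ! 1) (ys ! 0))"
proof -
  let ?b = "\<lambda>xs. lk c0 (xs ! 1) (1 + st (xs ! 0) 0)"
  let ?g = "\<lambda>zs. kmul enc (zs ! 0) (lk c0 (zs ! 3) (tidx m (zs ! 3) (zs ! 2) (Suc (zs ! 1))))"
  have G: "rcomp 4 (\<lambda>zs. zs ! 0 \<in> range enc \<and> goodc enc c0 (zs ! 3)) ?g"
    by (rule rc_kmul[OF cs]) (auto intro!: rci rc_lk rc_tidx simp: lk_range)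
  have acc: "rcomp 2 (\<lambda>ys. goodc enc c0 (ys ! 1)) (\<lambda>xs. prec ?b ?g (ln (xs ! 0)) xs)"
  proof (rule rc_prec[where E="\<lambda>zs. zs ! 0 \<in> range enc \<and> goodc enc c0 (zs ! 3)"])
    show "rcomp 2 (\<lambda>ys. goodc enc c0 (ys ! 1)) ?b" by (intro rci rc_lk rc_st) simp_all
    show "rcomp (Suc (Suc 2)) (\<lambda>zs. zs ! 0 \<in> range enc \<and> goodc enc c0 (zs ! 3)) ?g"
      using G by (simp add: numeral_eq_Suc)
    show "rcomp 2 (\<lambda>ys. goodc enc c0 (ys ! 1)) (\<lambda>xs. ln (xs ! 0))" by (intro rci rc_ln) simp_all
    fix n :: nat and xs :: "nat list" assume "length xs = 2" "goodc enc c0 (xs ! 1)"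
    then show "(prec ?b ?g n xs # n # xs) ! 0 \<in> range enc \<and> goodc enc c0 ((prec ?b ?g n xs # n # xs) ! 3)"
      using prec_accw[of xs c0 enc m n] accw_range[of enc c0 "xs ! 1" m "xs ! 0" n]
      by (simp add: numeral_3_eq_3)
  qed
  have "rcomp 2 (\<lambda>ys. goodc enc c0 (ys ! 1)) (\<lambda>xs. kmul enc (prec ?b ?g (ln (xs ! 0)) xs) (lk c0 (xs ! 1) (kidx m (xs ! 1) (xs ! 0))))"
  proof (rule rc_kmul[OF cs acc])
    show "rcomp 2 (\<lambda>ys. goodc enc c0 (ys ! 1)) (\<lambda>xs. lk c0 (xs ! 1) (kidx m (xs ! 1) (xs ! 0)))"
      by (intro rci rc_lk rc_kidx) simp_all
    fix xs :: "nat list" assume "length xs = 2" "goodc enc c0 (xs ! 1)"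
    then show "prec ?b ?g (ln (xs ! 0)) xs \<in> range enc \<and> lk c0 (xs ! 1) (kidx m (xs ! 1) (xs ! 0)) \<in> range enc"
      using prec_accw[of xs c0 enc m] accw_range[of enc c0 "xs ! 1"] lk_range[of enc c0 "xs ! 1"] by simp
  qed
  then show ?thesis by (rule rc_cong) (simp add: prec_accw[simplified] wt_def)
qed

lemma rc_good:
  assumes cs: "computable_semiring (enc :: 'k::comm_semiring_1 \<Rightarrow> nat)"
  shows "rcomp 2 (\<lambda>ys. goodc enc c0 (ys ! 1)) (\<lambda>ys. of_bool (good enc m c0 (ys ! 1) (ys ! 0)))"
  unfolding good_def by (intro rc_conj rc_valid rc_not rc_eq rc_wt[OF cs] rc_const rc_proj) simp_all

lemma rc_answer:
  assumes cs: "computable_semiring (enc :: 'k::comm_semiring_1 \<Rightarrow> nat)"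
  shows "rcomp 1 (\<lambda>xs. goodc enc c0 (xs ! 0)) (\<lambda>xs. answer enc m c0 (xs ! 0))"
  unfolding answer_def
proof (rule rc_if)
  have G2: "rcomp 2 (\<lambda>ys. goodc enc c0 (tl ys ! 0)) (\<lambda>ys. of_bool (good enc m c0 (ys ! 1) (ys ! 0)))"
  proof (rule rc_mono[OF rc_good[OF cs]])
    fix ys :: "nat list" assume "length ys = 2" "goodc enc c0 (tl ys ! 0)"
    then show "goodc enc c0 (ys ! 1)" by (cases ys) auto
  qed
  have G: "rcomp (Suc 1) (\<lambda>ys. goodc enc c0 (tl ys ! 0)) (\<lambda>ys. of_bool (good enc m c0 (ys ! 1) (ys ! 0)))"
    using G2 by (simp only: Suc_1)
  show "rcomp 1 (\<lambda>xs. goodc enc c0 (xs ! 0)) (\<lambda>xs. of_bool (\<exists>t<Tb m (xs ! 0). good enc m c0 (xs ! 0) t))"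
    by (rule rc_ex[OF G]) (auto intro!: rc_Tb rc_proj)
qed (auto intro!: rc_const)

theorem main:
  fixes enc :: "'k::comm_semiring_1 \<Rightarrow> nat" and m :: nat
  assumes cs: "computable_semiring enc"
    and z: "zero_sum_free TYPE('k)"
  shows "\<exists>p. \<forall>A :: 'k wnwa.
           eval p [code_wnwa m enc A]
             (if (\<forall>nw \<in> NW m. behaviour A nw = 0) then 1 else 0)"
proof -
  have inj: "inj enc" using cs by (simp add: computable_semiring_def)
  obtain p where p: "\<forall>xs. length xs = 1 \<longrightarrow> goodc enc (enc 0) (xs ! 0) \<longrightarrow> eval p xs (answer enc m (enc 0) (xs ! 0))"
    using rc_answer[OF cs, of "enc 0" m] unfolding rcomp_def by blast
  show ?thesis
  proof (intro exI[of _ p] allI)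
    fix A :: "'k wnwa"
    let ?c = "code_wnwa m enc A"
    have gc: "goodc enc (enc 0) ?c"
      unfolding goodc_def code_lay using lay_enc by (auto simp: nthc_enc lenc_enc)
    have ans: "answer enc m (enc 0) ?c = (if (\<forall>nw \<in> NW m. behaviour A nw = 0) then 1 else 0)"
      unfolding answer_def using decide_ok[OF inj z, of m A] by auto
    show "eval p [?c] (if (\<forall>nw \<in> NW m. behaviour A nw = 0) then 1 else 0)"
      using p[rule_format, of "[?c]"] gc ans by simp
  qed
qed


theorem corollary5p11:
  fixes enc :: "'k::comm_semiring_1 \<Rightarrow> nat" and m :: nat
  assumes "computable_semiring enc"
    and "zero_sum_free TYPE('k)"
  shows "\<exists>p. \<forall>A :: 'k wnwa.
           eval p [code_wnwa m enc A]
             (if (\<forall>nw \<in> NW m. behaviour A nw = 0) then 1 else 0)"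
  by (rule main[OF assms])

end
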